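(* Let $q\ge1$ and $\alpha\in(0,2\wedge q)$. For all $R>2$ and $K>0$ there is a constant $C=C(K,R)$ such that for all $0\le p,r\le R$, $\eta_0,\eta_1\in(1/R,1/2)$, $l\in\{1,\dots,q\}$, $0\le s<t\le t'<K$ and $x,x'\in[-K,K]^q$: $$\begin{aligned}\int\!\!\int&|w-x|^p|z-x|^p\,(p_{t-s,l}(w-x)-p_{t'-s,l}(w-x'))(p_{t-s,l}(z-x)-p_{t'-s,l}(z-x'))\\&\times\mathbf 1\{|w-x|>(t'-s)^{1/2-\eta_0}\vee2|x-x'|\}\,e^{r|w-x|+r|z-x|}(|w-z|^{-\alpha}+1)\,dw\,dz\\&\le C(t-s)^{-1-\alpha/2}\exp\big(-\eta_1(t'-s)^{-2\eta_0}/256\big)\Big[1\wedge\frac{|x-x'|^2+|t-t'|}{t-s}\Big]^{1-\eta_1/2}.\end{aligned}$$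
   Context: $p_t(x)=(2\pi t)^{-q/2}\exp(-|x|^2/(2t))$ is the heat kernel on $\mathbb R^q$ and $p_{t,l}(x)=\partial_{x_l}p_t(x)=-\frac{x_l}{t}p_t(x)$; integrals are over $\mathbb R^q$. *)

theory Defs
  imports "HOL-Analysis.Analysis"
begin

text \<open>Heat kernel on R^q, with R^q rendered as real^'q, q = CARD('q).\<close>
definition heat_kernel :: "real \<Rightarrow> real^'q \<Rightarrow> real" where
  "heat_kernel t x = (2 * pi * t) powr (- real CARD('q) / 2) * exp (- (norm x)\<^sup>2 / (2 * t))"

text \<open>p_{t,l}(x) = d/dx_l p_t(x) = -(x_l/t) p_t(x).\<close>
definition heat_kernel_d :: "real \<Rightarrow> 'q \<Rightarrow> real^'q \<Rightarrow> real" where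
  "heat_kernel_d t l x = - (x $ l / t) * heat_kernel t x"

end

theory Submission
  imports Defs "HOL-Probability.Probability"
begin


lemma gauss1: "(\<integral>\<^sup>+x. ennreal (exp (- x\<^sup>2)) \<partial>lborel) = ennreal (sqrt pi)"
proof -
  have eq: "normal_density 0 (1/sqrt 2) x = exp (- x\<^sup>2) / sqrt pi" for x
    by (simp add: normal_density_def real_sqrt_mult field_simps)
  have "(\<integral>\<^sup>+x. ennreal (normal_density 0 (1/sqrt 2) x) \<partial>lborel) = ennreal 1"
    by (subst nn_integral_eq_integral) auto
  hence "(\<integral>\<^sup>+x. ennreal (exp (- x\<^sup>2) / sqrt pi) \<partial>lborel) = 1"
    by (simp only: eq ennreal_1)
  moreover have "\<And>x. ennreal (exp (- x\<^sup>2) / sqrt pi) = ennreal (exp (- x\<^sup>2)) * ennreal (1 / sqrt pi)"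
    by (simp add: ennreal_mult'[symmetric])
  ultimately have "(\<integral>\<^sup>+x. ennreal (exp (- x\<^sup>2)) * ennreal (1 / sqrt pi) \<partial>lborel) = 1"
    by simp
  hence "(\<integral>\<^sup>+x. ennreal (exp (- x\<^sup>2)) \<partial>lborel) * ennreal (1 / sqrt pi) = 1"
    by (subst (asm) nn_integral_multc) auto
  hence "(\<integral>\<^sup>+x. ennreal (exp (- x\<^sup>2)) \<partial>lborel) * ennreal (1 / sqrt pi) * ennreal (sqrt pi) = ennreal (sqrt pi)"
    by simp
  thus ?thesis by (simp add: mult.assoc ennreal_mult'[symmetric])
qed

lemma norm_sq_basis: "(norm (v::'a::euclidean_space))\<^sup>2 = (\<Sum>b\<in>Basis. (v \<bullet> b)\<^sup>2)"
  by (subst power2_norm_eq_inner, subst euclidean_inner) (simp add: power2_eq_square)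

lemma gaussN: "(\<integral>\<^sup>+v. ennreal (exp (- (norm (v::'a::euclidean_space))\<^sup>2)) \<partial>lborel) = ennreal (sqrt pi ^ DIM('a))"
proof -
  have "(\<lambda>v::'a. ennreal (exp (- (norm v)\<^sup>2))) = (\<lambda>v. \<Prod>b\<in>Basis. ennreal (exp (- (v \<bullet> b)\<^sup>2)))"
    by (auto simp: norm_sq_basis exp_sum[symmetric] sum_negf prod_ennreal)
  hence "(\<integral>\<^sup>+v. ennreal (exp (- (norm (v::'a))\<^sup>2)) \<partial>lborel) = (\<Prod>b\<in>(Basis::'a set). (\<integral>\<^sup>+x. ennreal (exp (- x\<^sup>2)) \<partial>lborel))"
    by (simp only:) (subst nn_integral_lborel_prod, auto)
  also have "\<dots> = ennreal (sqrt pi ^ DIM('a))"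
    by (simp add: gauss1 prod_ennreal ennreal_power)
  finally show ?thesis .
qed

lemma nn_integral_scale:
  fixes f :: "'a::euclidean_space \<Rightarrow> ennreal"
  assumes [measurable]: "f \<in> borel_measurable borel" and c: "c > 0"
  shows "(\<integral>\<^sup>+w. f w \<partial>lborel) = ennreal (c ^ DIM('a)) * (\<integral>\<^sup>+v. f (t + c *\<^sub>R v) \<partial>lborel)"
proof -
  have "(\<integral>\<^sup>+w. f w \<partial>lborel) = (\<integral>\<^sup>+w. f w \<partial>density (distr lborel borel (\<lambda>x. t + c *\<^sub>R x)) (\<lambda>_. \<bar>c\<bar>^DIM('a)))"
    using lborel_affine[of c t] c by simp
  also have "\<dots> = (\<integral>\<^sup>+v. ennreal (\<bar>c\<bar>^DIM('a)) * f (t + c *\<^sub>R v) \<partial>lborel)"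
    by (simp add: nn_integral_density nn_integral_distr)
  also have "\<dots> = ennreal (c ^ DIM('a)) * (\<integral>\<^sup>+v. f (t + c *\<^sub>R v) \<partial>lborel)"
    using c by (simp add: nn_integral_cmult)
  finally show ?thesis .
qed

lemma powr01: assumes "0 \<le> \<beta>" "\<beta> < 1"
  shows "(\<integral>\<^sup>+y. ennreal (y powr (-\<beta>)) * indicator {0..1} y \<partial>lborel) = ennreal (1/(1-\<beta>))"
proof -
  have hi: "((\<lambda>y. y powr (-\<beta>)) has_integral (1 powr (-\<beta>+1) / (-\<beta>+1))) {0..1}"
    by (rule has_integral_powr_from_0) (use assms in auto)
  have "(\<integral>\<^sup>+y. ennreal (y powr (-\<beta>)) * indicator {0..1} y \<partial>lborel) = ennreal (1 powr (-\<beta>+1) / (-\<beta>+1))"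
    by (rule nn_integral_has_integral_lebesgue'[OF _ hi]) auto
  thus ?thesis by simp
qed

lemma sing1: assumes "0 \<le> \<beta>" "\<beta> < 1"
  shows "(\<integral>\<^sup>+y. ennreal (\<bar>y\<bar> powr (-\<beta>)) * indicator {-1..1} y \<partial>lborel) \<le> ennreal (2/(1-\<beta>))"
proof -
  let ?g = "\<lambda>y::real. ennreal (y powr (-\<beta>)) * indicator {0..1} y"
  have le: "ennreal (\<bar>y\<bar> powr (-\<beta>)) * indicator {-1..1} y \<le> ?g y + ?g (-y)" for y
    by (cases "y \<ge> 0") (auto simp: indicator_def)
  have "(\<integral>\<^sup>+y. ennreal (\<bar>y\<bar> powr (-\<beta>)) * indicator {-1..1} y \<partial>lborel) \<le> (\<integral>\<^sup>+y. ?g y + ?g (-y) \<partial>lborel)"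
    by (rule nn_integral_mono) (use le in auto)
  also have "\<dots> = (\<integral>\<^sup>+y. ?g y \<partial>lborel) + (\<integral>\<^sup>+y. ?g (-y) \<partial>lborel)"
    by (rule nn_integral_add) auto
  also have "(\<integral>\<^sup>+y. ?g (-y) \<partial>lborel) = (\<integral>\<^sup>+y. ?g y \<partial>lborel)"
    using nn_integral_real_affine[of ?g "-1" 0] by simp
  also have "(\<integral>\<^sup>+y. ?g y \<partial>lborel) = ennreal (1/(1-\<beta>))" by (rule powr01) (use assms in auto)
  finally show ?thesis using assms by (simp add: ennreal_plus[symmetric] del: ennreal_plus)
qed

lemma J1: assumes "0 \<le> \<beta>" "\<beta> < 1"
  shows "(\<integral>\<^sup>+x. ennreal (exp (- x\<^sup>2) * \<bar>m - x\<bar> powr (-\<beta>)) \<partial>lborel) \<le> ennreal (2/(1-\<beta>) + sqrt pi)"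
proof -
  let ?f = "\<lambda>x::real. ennreal (\<bar>x - m\<bar> powr (-\<beta>)) * indicator {-1..1} (x - m)"
  have le: "ennreal (exp (- x\<^sup>2) * \<bar>m - x\<bar> powr (-\<beta>)) \<le> ?f x + ennreal (exp (- x\<^sup>2))" for x
  proof (cases "\<bar>x - m\<bar> \<le> 1")
    case True
    have "exp (- x\<^sup>2) * \<bar>m - x\<bar> powr (-\<beta>) \<le> \<bar>x - m\<bar> powr (-\<beta>)"
      using mult_right_mono[of "exp (- x\<^sup>2)" 1 "\<bar>m - x\<bar> powr (-\<beta>)"] by (simp add: abs_minus_commute)
    hence "ennreal (exp (- x\<^sup>2) * \<bar>m - x\<bar> powr (-\<beta>)) \<le> ennreal (\<bar>x - m\<bar> powr (-\<beta>))"
      by (rule ennreal_leI)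
    also have "\<dots> = ?f x" using True by (simp add: indicator_def abs_le_iff)
    also have "\<dots> \<le> ?f x + ennreal (exp (- x\<^sup>2))" by (rule add_increasing2) auto
    finally show ?thesis .
  next
    case False
    have "1 \<le> \<bar>m - x\<bar> powr \<beta>"
      using False assms ge_one_powr_ge_zero[of "\<bar>m - x\<bar>" \<beta>] by (simp add: abs_minus_commute)
    hence "\<bar>m - x\<bar> powr (-\<beta>) \<le> 1"
      by (simp add: powr_minus divide_inverse inverse_le_1_iff)
    hence "exp (- x\<^sup>2) * \<bar>m - x\<bar> powr (-\<beta>) \<le> exp (- x\<^sup>2)"
      by (simp add: mult_left_le)
    hence "ennreal (exp (- x\<^sup>2) * \<bar>m - x\<bar> powr (-\<beta>)) \<le> ennreal (exp (- x\<^sup>2))"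
      by (rule ennreal_leI)
    also have "\<dots> \<le> ?f x + ennreal (exp (- x\<^sup>2))" by (rule add_increasing) auto
    finally show ?thesis .
  qed
  have "(\<integral>\<^sup>+x. ennreal (exp (- x\<^sup>2) * \<bar>m - x\<bar> powr (-\<beta>)) \<partial>lborel) \<le> (\<integral>\<^sup>+x. ?f x + ennreal (exp (- x\<^sup>2)) \<partial>lborel)"
    by (rule nn_integral_mono) (rule le)
  also have "\<dots> = (\<integral>\<^sup>+x. ?f x \<partial>lborel) + (\<integral>\<^sup>+x. ennreal (exp (- x\<^sup>2)) \<partial>lborel)"
    by (rule nn_integral_add) auto
  also have "(\<integral>\<^sup>+x. ?f x \<partial>lborel) = (\<integral>\<^sup>+x. ?f (m + 1 * x) \<partial>lborel)"
    using nn_integral_real_affine[of ?f 1 m] by simp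
  also have "\<dots> = (\<integral>\<^sup>+y. ennreal (\<bar>y\<bar> powr (-\<beta>)) * indicator {-1..1} y \<partial>lborel)" by simp
  also have "\<dots> + (\<integral>\<^sup>+x. ennreal (exp (- x\<^sup>2)) \<partial>lborel) \<le> ennreal (2 / (1 - \<beta>)) + ennreal (sqrt pi)"
    unfolding gauss1 by (rule add_mono[OF sing1[OF assms]]) simp
  finally have "(\<integral>\<^sup>+x. ennreal (exp (- x\<^sup>2) * \<bar>m - x\<bar> powr (-\<beta>)) \<partial>lborel) \<le> ennreal (2 / (1 - \<beta>)) + ennreal (sqrt pi)" .
  thus ?thesis using assms by (subst ennreal_plus) auto
qed


lemma JN:
  fixes u :: "'a::euclidean_space" and \<alpha> :: real
  assumes a0: "0 < \<alpha>" and a1: "\<alpha> < DIM('a)"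
  shows "(\<integral>\<^sup>+v. ennreal (exp (- (norm v)\<^sup>2) * norm (u - v) powr (-\<alpha>)) \<partial>lborel)
     \<le> ennreal ((2/(1-\<alpha>/DIM('a)) + sqrt pi) ^ DIM('a))"
proof -
  define n where "n = DIM('a)"
  define \<beta> where "\<beta> = \<alpha> / n"
  have n0: "n > 0" by (simp add: n_def)
  have b0: "0 < \<beta>" and b1: "\<beta> < 1" using a0 a1 n0 by (auto simp: \<beta>_def n_def field_simps)
  define \<psi> where "\<psi> b x = (if x = u \<bullet> b then \<top> else ennreal (exp (- x\<^sup>2) * \<bar>u \<bullet> b - x\<bar> powr (-\<beta>)))" for b :: 'a and x :: real
  have \<psi>nz: "\<psi> b x \<noteq> 0" for b x
    by (auto simp: \<psi>_def)
  have pw: "ennreal (exp (- (norm v)\<^sup>2) * norm (u - v) powr (-\<alpha>)) \<le> (\<Prod>b\<in>Basis. \<psi> b (v \<bullet> b))" for v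
  proof (cases "\<exists>b\<in>Basis. v \<bullet> b = u \<bullet> b")
    case True
    hence "(\<Prod>b\<in>Basis. \<psi> b (v \<bullet> b)) = \<top>"
      by (subst ennreal_prod_eq_top) (auto simp: \<psi>nz \<psi>_def)
    thus ?thesis by simp
  next
    case False
    hence ne: "\<And>b. b \<in> Basis \<Longrightarrow> v \<bullet> b \<noteq> u \<bullet> b" by auto
    have "(\<Prod>b\<in>Basis. \<psi> b (v \<bullet> b)) = (\<Prod>b\<in>Basis. ennreal (exp (- (v \<bullet> b)\<^sup>2) * \<bar>u \<bullet> b - v \<bullet> b\<bar> powr (-\<beta>)))"
      using ne by (intro prod.cong) (auto simp: \<psi>_def)
    also have "\<dots> = ennreal (\<Prod>b\<in>Basis. exp (- (v \<bullet> b)\<^sup>2) * \<bar>u \<bullet> b - v \<bullet> b\<bar> powr (-\<beta>))"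
      by (simp add: prod_ennreal)
    finally have eq: "(\<Prod>b\<in>Basis. \<psi> b (v \<bullet> b)) = \<dots>" .
    have uv: "u \<noteq> v" using ne SOME_Basis by blast
    hence nuv: "norm (u - v) > 0" by simp
    have "(\<Prod>b\<in>(Basis::'a set). norm (u - v) powr (-\<beta>)) \<le> (\<Prod>b\<in>Basis. \<bar>u \<bullet> b - v \<bullet> b\<bar> powr (-\<beta>))"
    proof (rule prod_mono, safe)
      fix b :: 'a assume b: "b \<in> Basis"
      have "\<bar>(u - v) \<bullet> b\<bar> \<le> norm (u - v)" using b by (rule Basis_le_norm)
      moreover have "\<bar>(u - v) \<bullet> b\<bar> > 0" using ne[OF b] by (simp add: inner_diff_left)
      ultimately show "norm (u - v) powr (-\<beta>) \<le> \<bar>u \<bullet> b - v \<bullet> b\<bar> powr (-\<beta>)"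
        using b0 by (intro powr_mono2') (auto simp: inner_diff_left)
    qed simp
    moreover have "(\<Prod>b\<in>(Basis::'a set). norm (u - v) powr (-\<beta>)) = norm (u - v) powr (-\<alpha>)"
      using n0 uv by (simp add: powr_power \<beta>_def n_def)
    ultimately have A: "norm (u - v) powr (-\<alpha>) \<le> (\<Prod>b\<in>Basis. \<bar>u \<bullet> b - v \<bullet> b\<bar> powr (-\<beta>))" by simp
    have B: "exp (- (norm v)\<^sup>2) = (\<Prod>b\<in>Basis. exp (- (v \<bullet> b)\<^sup>2))"
      by (simp add: norm_sq_basis exp_sum[symmetric] sum_negf)
    have "exp (- (norm v)\<^sup>2) * norm (u - v) powr (-\<alpha>) \<le> (\<Prod>b\<in>Basis. exp (- (v \<bullet> b)\<^sup>2)) * (\<Prod>b\<in>Basis. \<bar>u \<bullet> b - v \<bullet> b\<bar> powr (-\<beta>))"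
      unfolding B by (rule mult_left_mono[OF A]) (simp add: prod_nonneg)
    also have "\<dots> = (\<Prod>b\<in>Basis. exp (- (v \<bullet> b)\<^sup>2) * \<bar>u \<bullet> b - v \<bullet> b\<bar> powr (-\<beta>))"
      by (simp add: prod.distrib)
    finally show ?thesis unfolding eq by (rule ennreal_leI)
  qed
  have [measurable]: "\<psi> b \<in> borel_measurable borel" for b
    unfolding \<psi>_def by measurable
  have "(\<integral>\<^sup>+v. ennreal (exp (- (norm v)\<^sup>2) * norm (u - v) powr (-\<alpha>)) \<partial>lborel) \<le> (\<integral>\<^sup>+v. (\<Prod>b\<in>Basis. \<psi> b (v \<bullet> b)) \<partial>lborel)"
    by (rule nn_integral_mono) (rule pw)
  also have "\<dots> = (\<Prod>b\<in>Basis. (\<integral>\<^sup>+x. \<psi> b x \<partial>lborel))"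
    by (rule nn_integral_lborel_prod) auto
  also have "\<dots> = (\<Prod>b\<in>Basis. (\<integral>\<^sup>+x. ennreal (exp (- x\<^sup>2) * \<bar>u \<bullet> b - x\<bar> powr (-\<beta>)) \<partial>lborel))"
  proof (rule prod.cong[OF refl], rule nn_integral_cong_AE)
    fix b :: 'a
    show "AE x in lborel. \<psi> b x = ennreal (exp (- x\<^sup>2) * \<bar>u \<bullet> b - x\<bar> powr (-\<beta>))"
      using AE_lborel_singleton[of "u \<bullet> b"] by eventually_elim (auto simp: \<psi>_def)
  qed
  also have "\<dots> \<le> (\<Prod>b\<in>(Basis::'a set). ennreal (2/(1-\<beta>) + sqrt pi))"
    by (rule prod_mono_ennreal) (use J1[OF less_imp_le[OF b0] b1] in auto)
  also have "\<dots> = ennreal ((2/(1-\<alpha>/DIM('a)) + sqrt pi) ^ DIM('a))"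
  proof -
    have "0 \<le> 2/(1-\<beta>) + sqrt pi" using b1 by auto
    thus ?thesis by (simp add: ennreal_power \<beta>_def n_def del: ennreal_plus)
  qed
  finally show ?thesis .
qed


lemma INT1:
  fixes y0 :: "'a::euclidean_space"
  assumes c: "c > 0"
  shows "(\<integral>\<^sup>+w. ennreal (exp (- (norm (w - y0))\<^sup>2 / c)) \<partial>lborel) = ennreal (sqrt c ^ DIM('a) * sqrt pi ^ DIM('a))"
proof -
  have "(\<integral>\<^sup>+w. ennreal (exp (- (norm (w - y0))\<^sup>2 / c)) \<partial>lborel)
      = ennreal (sqrt c ^ DIM('a)) * (\<integral>\<^sup>+v. ennreal (exp (- (norm (y0 + sqrt c *\<^sub>R v - y0))\<^sup>2 / c)) \<partial>lborel)"
    by (rule nn_integral_scale) (use c in auto)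
  also have "(\<lambda>v. ennreal (exp (- (norm (y0 + sqrt c *\<^sub>R v - y0))\<^sup>2 / c))) = (\<lambda>v. ennreal (exp (- (norm v)\<^sup>2)))"
    using c by (auto simp: power_mult_distrib)
  also note gaussN
  finally show ?thesis using c by (simp add: ennreal_mult)
qed

lemma INT2:
  fixes y0 u :: "'a::euclidean_space" and \<alpha> :: real
  assumes c: "c > 0" and a0: "0 < \<alpha>" and a1: "\<alpha> < DIM('a)"
  shows "(\<integral>\<^sup>+w. ennreal (exp (- (norm (w - y0))\<^sup>2 / c) * norm (u - w) powr (-\<alpha>)) \<partial>lborel)
    \<le> ennreal (sqrt c ^ DIM('a) * sqrt c powr (-\<alpha>) * (2/(1-\<alpha>/DIM('a)) + sqrt pi) ^ DIM('a))"
proof -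
  define s where "s = sqrt c"
  have s: "s > 0" using c by (simp add: s_def)
  define u' where "u' = (1/s) *\<^sub>R (u - y0)"
  have eqv: "exp (- (norm (y0 + s *\<^sub>R v - y0))\<^sup>2 / c) * norm (u - (y0 + s *\<^sub>R v)) powr (-\<alpha>)
      = s powr (-\<alpha>) * (exp (- (norm v)\<^sup>2) * norm (u' - v) powr (-\<alpha>))" for v
  proof -
    have "u - (y0 + s *\<^sub>R v) = s *\<^sub>R (u' - v)" using s by (simp add: u'_def algebra_simps)
    hence "norm (u - (y0 + s *\<^sub>R v)) = s * norm (u' - v)" using s by simp
    moreover have "(norm (s *\<^sub>R v))\<^sup>2 / c = (norm v)\<^sup>2" using s c by (simp add: power_mult_distrib s_def)
    ultimately show ?thesis using s by (simp add: powr_mult)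
  qed
  have "(\<integral>\<^sup>+w. ennreal (exp (- (norm (w - y0))\<^sup>2 / c) * norm (u - w) powr (-\<alpha>)) \<partial>lborel)
      = ennreal (s ^ DIM('a)) * (\<integral>\<^sup>+v. ennreal (exp (- (norm (y0 + s *\<^sub>R v - y0))\<^sup>2 / c) * norm (u - (y0 + s *\<^sub>R v)) powr (-\<alpha>)) \<partial>lborel)"
    by (rule nn_integral_scale) (use s in auto)
  also have "(\<integral>\<^sup>+v. ennreal (exp (- (norm (y0 + s *\<^sub>R v - y0))\<^sup>2 / c) * norm (u - (y0 + s *\<^sub>R v)) powr (-\<alpha>)) \<partial>lborel)
      = (\<integral>\<^sup>+v. ennreal (s powr (-\<alpha>)) * ennreal (exp (- (norm v)\<^sup>2) * norm (u' - v) powr (-\<alpha>)) \<partial>lborel)"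
    unfolding eqv by (simp add: ennreal_mult'[symmetric])
  also have "\<dots> = ennreal (s powr (-\<alpha>)) * (\<integral>\<^sup>+v. ennreal (exp (- (norm v)\<^sup>2) * norm (u' - v) powr (-\<alpha>)) \<partial>lborel)"
    by (rule nn_integral_cmult) auto
  also have "ennreal (s ^ DIM('a)) * \<dots> \<le> ennreal (s ^ DIM('a)) * (ennreal (s powr (-\<alpha>)) * ennreal ((2/(1-\<alpha>/DIM('a)) + sqrt pi) ^ DIM('a)))"
    by (intro mult_left_mono JN a0 a1) auto
  also have "\<dots> = ennreal (sqrt c ^ DIM('a) * sqrt c powr (-\<alpha>) * (2/(1-\<alpha>/DIM('a)) + sqrt pi) ^ DIM('a))"
    using s a1 by (simp add: ennreal_mult'[symmetric] s_def mult.assoc)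
  finally show ?thesis .
qed


lemma INT1':
  fixes y0 :: "'a::euclidean_space"
  assumes c: "c > 0" and M: "M > 0"
  shows "(\<integral>\<^sup>+w. ennreal (c powr (-(real DIM('a)+1)/2) * exp (- (norm (w - y0))\<^sup>2 / (M*c))) \<partial>lborel)
      = ennreal (c powr (-1/2) * (sqrt (M*pi)) ^ DIM('a))"
proof -
  have Mc: "M*c > 0" using c M by simp
  have "(\<integral>\<^sup>+w. ennreal (c powr (-(real DIM('a)+1)/2) * exp (- (norm (w - y0))\<^sup>2 / (M*c))) \<partial>lborel)
      = ennreal (c powr (-(real DIM('a)+1)/2)) * (\<integral>\<^sup>+w. ennreal (exp (- (norm (w - y0))\<^sup>2 / (M*c))) \<partial>lborel)"
    by (subst nn_integral_cmult[symmetric]) (auto simp: ennreal_mult')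
  also have "\<dots> = ennreal (c powr (-(real DIM('a)+1)/2) * (sqrt (M*c) ^ DIM('a) * sqrt pi ^ DIM('a)))"
    by (subst INT1[OF Mc]) (simp add: ennreal_mult')
  also have "c powr (-(real DIM('a)+1)/2) * (sqrt (M*c) ^ DIM('a) * sqrt pi ^ DIM('a)) = c powr (-1/2) * (sqrt (M*pi)) ^ DIM('a)"
  proof -
    have pw: "(c powr (1/2)) ^ DIM('a) = c powr (real DIM('a)/2)" using c by (subst powr_power) auto
    have e1: "sqrt (M*c) ^ DIM('a) = sqrt M ^ DIM('a) * c powr (real DIM('a)/2)"
      unfolding pw[symmetric] using c M by (simp add: real_sqrt_mult power_mult_distrib powr_half_sqrt)
    have e2: "c powr (-(real DIM('a)+1)/2) * c powr (real DIM('a)/2) = c powr (-1/2)"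
      by (simp add: powr_add[symmetric] field_simps)
    have e3: "sqrt (M*pi) ^ DIM('a) = sqrt M ^ DIM('a) * sqrt pi ^ DIM('a)"
      by (simp add: real_sqrt_mult power_mult_distrib)
    have "c powr (-(real DIM('a)+1)/2) * (sqrt (M*c) ^ DIM('a) * sqrt pi ^ DIM('a))
        = (c powr (-(real DIM('a)+1)/2) * c powr (real DIM('a)/2)) * (sqrt M ^ DIM('a) * sqrt pi ^ DIM('a))"
      unfolding e1 by (simp only: mult_ac)
    thus ?thesis unfolding e2 e3 .
  qed
  finally show ?thesis .
qed


lemma INT2':
  fixes y0 u :: "'a::euclidean_space" and \<alpha> :: real
  assumes c: "c > 0" and M: "M > 0" and a0: "0 < \<alpha>" and a1: "\<alpha> < DIM('a)"
  shows "(\<integral>\<^sup>+w. ennreal (c powr (-(real DIM('a)+1)/2) * exp (- (norm (w - y0))\<^sup>2 / (M*c)) * norm (u - w) powr (-\<alpha>)) \<partial>lborel)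
      \<le> ennreal (c powr (-1/2 - \<alpha>/2) * (sqrt M ^ DIM('a) * sqrt M powr (-\<alpha>) * (2/(1-\<alpha>/DIM('a)) + sqrt pi) ^ DIM('a)))"
proof -
  have Mc: "M*c > 0" using c M by simp
  define J where "J = (2/(1-\<alpha>/DIM('a)) + sqrt pi) ^ DIM('a)"
  have J0: "0 \<le> J" using a1 by (simp add: J_def)
  have "(\<integral>\<^sup>+w. ennreal (c powr (-(real DIM('a)+1)/2) * exp (- (norm (w - y0))\<^sup>2 / (M*c)) * norm (u - w) powr (-\<alpha>)) \<partial>lborel)
      = ennreal (c powr (-(real DIM('a)+1)/2)) * (\<integral>\<^sup>+w. ennreal (exp (- (norm (w - y0))\<^sup>2 / (M*c)) * norm (u - w) powr (-\<alpha>)) \<partial>lborel)"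
    by (subst nn_integral_cmult[symmetric]) (auto simp: ennreal_mult' mult.assoc)
  also have "\<dots> \<le> ennreal (c powr (-(real DIM('a)+1)/2)) * ennreal (sqrt (M*c) ^ DIM('a) * sqrt (M*c) powr (-\<alpha>) * J)"
    unfolding J_def by (intro mult_left_mono INT2 Mc a0 a1) auto
  also have "\<dots> = ennreal (c powr (-(real DIM('a)+1)/2) * (sqrt (M*c) ^ DIM('a) * sqrt (M*c) powr (-\<alpha>) * J))"
    by (simp add: ennreal_mult')
  also have "c powr (-(real DIM('a)+1)/2) * (sqrt (M*c) ^ DIM('a) * sqrt (M*c) powr (-\<alpha>) * J)
      = c powr (-1/2 - \<alpha>/2) * (sqrt M ^ DIM('a) * sqrt M powr (-\<alpha>) * J)"
  proof -
    have pw: "(c powr (1/2)) ^ DIM('a) = c powr (real DIM('a)/2)" using c by (subst powr_power) auto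
    have e1: "sqrt (M*c) ^ DIM('a) = sqrt M ^ DIM('a) * c powr (real DIM('a)/2)"
      unfolding pw[symmetric] using c M by (simp add: real_sqrt_mult power_mult_distrib powr_half_sqrt)
    have e4: "sqrt (M*c) powr (-\<alpha>) = sqrt M powr (-\<alpha>) * c powr (-\<alpha>/2)"
    proof -
      have "sqrt c powr (-\<alpha>) = c powr (-\<alpha>/2)"
        using c by (simp add: powr_half_sqrt[symmetric] powr_powr)
      thus ?thesis by (simp add: real_sqrt_mult powr_mult)
    qed
    have e2: "c powr (-(real DIM('a)+1)/2) * c powr (real DIM('a)/2) * c powr (-\<alpha>/2) = c powr (-1/2 - \<alpha>/2)"
      by (simp add: powr_add[symmetric] field_simps)
    have "c powr (-(real DIM('a)+1)/2) * (sqrt (M*c) ^ DIM('a) * sqrt (M*c) powr (-\<alpha>) * J)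
        = (c powr (-(real DIM('a)+1)/2) * c powr (real DIM('a)/2) * c powr (-\<alpha>/2)) * (sqrt M ^ DIM('a) * sqrt M powr (-\<alpha>) * J)"
      unfolding e1 e4 by (simp only: mult_ac)
    thus ?thesis unfolding e2 .
  qed
  finally show ?thesis unfolding J_def .
qed


lemma sig_le: assumes "0 \<le> (\<sigma>::real)" shows "\<sigma> \<le> 2 * exp (\<sigma>\<^sup>2/12)"
proof -
  have "0 \<le> (\<sigma> - 3)\<^sup>2" by simp
  hence "\<sigma> \<le> 2 * (1 + \<sigma>\<^sup>2/12)" by (simp add: power2_eq_square algebra_simps)
  moreover have "2 * (1 + \<sigma>\<^sup>2/12) \<le> 2 * exp (\<sigma>\<^sup>2/12)" using mult_left_mono[OF exp_ge_add_one_self[of "\<sigma>\<^sup>2/12"], of 2] by simp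
  ultimately show ?thesis by linarith
qed

lemma sig_le4: assumes "0 \<le> (\<sigma>::real)" shows "\<sigma> \<le> exp (\<sigma>\<^sup>2/4)"
proof -
  have "1 + \<sigma>\<^sup>2/4 \<le> exp (\<sigma>\<^sup>2/4)" by (rule exp_ge_add_one_self)
  moreover have "0 \<le> (\<sigma> - 2)\<^sup>2" by simp
  hence "\<sigma> \<le> 1 + \<sigma>\<^sup>2/4" by (simp add: power2_eq_square algebra_simps)
  ultimately show ?thesis by linarith
qed

lemma cube_exp: assumes "0 \<le> (\<sigma>::real)" shows "(1+\<sigma>)^3 * exp (-\<sigma>\<^sup>2/2) \<le> 27 * exp (-\<sigma>\<^sup>2/4)"
proof -
  define e where "e = exp (\<sigma>\<^sup>2/12)"
  have e1: "1 \<le> e" unfolding e_def by simp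
  have "1 + \<sigma> \<le> 3 * e" using sig_le[OF assms] e1 unfolding e_def by linarith
  hence "(1+\<sigma>)^3 \<le> (3*e)^3" by (rule power_mono) (use assms in simp)
  also have "(3*e)^3 = 27 * exp (\<sigma>\<^sup>2/4)"
    unfolding e_def by (simp add: power_mult_distrib exp_of_nat_mult[symmetric])
  finally have "(1+\<sigma>)^3 * exp (-\<sigma>\<^sup>2/2) \<le> 27 * exp (\<sigma>\<^sup>2/4) * exp (-\<sigma>\<^sup>2/2)"
    by (rule mult_right_mono) simp
  also have "\<dots> = 27 * exp (-\<sigma>\<^sup>2/4)" by (simp add: mult.assoc exp_add[symmetric])
  finally show ?thesis .
qed

lemma kconst_le1: "(2*pi) powr (- real CARD('q) / 2) \<le> 1"
proof -
  have "1 \<le> (2*pi) powr (real CARD('q) / 2)" by (rule ge_one_powr_ge_zero) (use pi_gt3 in auto)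
  thus ?thesis by (simp add: powr_minus_divide)
qed


lemma hk_form:
  fixes y :: "real^'q"
  assumes c: "c > 0"
  shows "heat_kernel_d c l y = - ((2*pi) powr (- real CARD('q) / 2)) * y $ l
            * exp (- (norm y)\<^sup>2 / (2*c) - (real CARD('q)/2 + 1) * ln c)"
proof -
  define K where "K = (2*pi) powr (- real CARD('q) / 2)"
  define P where "P = exp ((- real CARD('q) / 2) * ln c)"
  define E where "E = exp (- (norm y)\<^sup>2 / (2*c))"
  have 1: "(2*pi*c) powr (- real CARD('q) / 2) = K * P"
  proof -
    have "(2*pi*c) powr (- real CARD('q) / 2) = (2*pi) powr (- real CARD('q) / 2) * c powr (- real CARD('q) / 2)"
      by (rule powr_mult)
    moreover have "c powr (- real CARD('q) / 2) = exp ((- real CARD('q) / 2) * ln c)" using c by (simp add: powr_def)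
    ultimately show ?thesis by (simp add: K_def P_def)
  qed
  have 2: "P / c = exp (- (real CARD('q)/2 + 1) * ln c)"
  proof -
    have "exp (- (real CARD('q)/2 + 1) * ln c) = exp ((- real CARD('q) / 2) * ln c) / exp (ln c)"
      unfolding exp_diff[symmetric] by (simp add: algebra_simps)
    thus ?thesis using c by (simp add: P_def)
  qed
  have 3: "exp (- (norm y)\<^sup>2 / (2*c) - (real CARD('q)/2 + 1) * ln c) = E * exp (- (real CARD('q)/2 + 1) * ln c)"
    unfolding E_def exp_add[symmetric] by (simp add: algebra_simps)
  have "heat_kernel_d c l y = - (y $ l / c) * ((K * P) * E)"
    unfolding heat_kernel_d_def heat_kernel_def 1 E_def ..
  also have "\<dots> = - K * y $ l * (E * (P / c))" by (simp add: field_simps)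
  finally show ?thesis unfolding 3 2 K_def .
qed

lemma sqrt_exp_ln: "c > 0 \<Longrightarrow> sqrt c = exp (ln c / 2)"
  by (simp add: powr_half_sqrt[symmetric] powr_def)

lemma hk_bound:
  fixes y :: "real^'q"
  assumes c: "c > 0"
  shows "\<bar>heat_kernel_d c l y\<bar> \<le> c powr (- (real CARD('q) + 1) / 2) * exp (- (norm y)\<^sup>2 / (4*c))"
proof -
  define n where "n = real CARD('q)"
  define k where "k = (2*pi) powr (- n / 2)"
  define \<sigma> where "\<sigma> = norm y / sqrt c"
  have k: "0 \<le> k" "k \<le> 1" using kconst_le1[where 'q='q] by (auto simp: k_def n_def)
  have s0: "0 \<le> \<sigma>" unfolding \<sigma>_def by (rule divide_nonneg_nonneg) (use c in auto)
  have ny: "norm y = \<sigma> * sqrt c" using c by (simp add: \<sigma>_def)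
  have sq: "- (norm y)\<^sup>2 / (2*c) = - \<sigma>\<^sup>2/2" "- (norm y)\<^sup>2 / (4*c) = - \<sigma>\<^sup>2/4"
    using c by (simp_all add: ny power_mult_distrib)
  have e2: "exp (- \<sigma>\<^sup>2/2) = exp (- \<sigma>\<^sup>2/4) * exp (- \<sigma>\<^sup>2/4)"
    unfolding exp_add[symmetric] by simp
  define L where "L = exp (- (n/2 + 1) * ln c)"
  have L0: "L > 0" by (simp add: L_def)
  have eL: "exp (- (norm y)\<^sup>2 / (2*c) - (real CARD('q)/2 + 1) * ln c) = exp (- (norm y)\<^sup>2 / (2*c)) * L"
    unfolding L_def exp_add[symmetric] by (simp add: algebra_simps n_def)
  have "\<bar>heat_kernel_d c l y\<bar> = k * \<bar>y $ l\<bar> * exp (- (norm y)\<^sup>2 / (2*c)) * L"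
    unfolding hk_form[OF c] eL using k L0 by (simp add: abs_mult k_def n_def)
  also have "\<dots> \<le> 1 * norm y * exp (- (norm y)\<^sup>2 / (2*c)) * L"
    using k L0 by (intro mult_right_mono mult_mono component_le_norm_cart) auto
  also have "\<dots> = sqrt c * L * (\<sigma> * exp (-\<sigma>\<^sup>2/4)) * exp (-\<sigma>\<^sup>2/4)"
    unfolding sq e2 by (simp add: ny algebra_simps)
  also have "\<dots> \<le> sqrt c * L * 1 * exp (-\<sigma>\<^sup>2/4)"
    using sig_le4[OF s0] L0 c
    by (intro mult_right_mono mult_left_mono) (auto simp: exp_minus field_simps)
  also have "sqrt c * L = c powr (- (n + 1) / 2)"
    using c by (simp add: sqrt_exp_ln L_def powr_def exp_add[symmetric] field_simps)
  finally show ?thesis unfolding sq(2) n_def by simp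
qed


lemma deriv_M:
  fixes Q0 Q1 Q2 a \<delta> \<tau> m :: real
  assumes c: "a + \<tau>*\<delta> > 0"
  shows "((\<lambda>\<tau>. -(Q0 - 2*\<tau>*Q1 + \<tau>\<^sup>2*Q2)/(2*(a+\<tau>*\<delta>)) - m*ln(a+\<tau>*\<delta>)) has_real_derivative
      (((2*Q1 - 2*\<tau>*Q2)*(2*(a+\<tau>*\<delta>)) - (-(Q0 - 2*\<tau>*Q1 + \<tau>\<^sup>2*Q2))*(2*\<delta>))/((2*(a+\<tau>*\<delta>))*(2*(a+\<tau>*\<delta>)))
        - m*\<delta>/(a+\<tau>*\<delta>))) (at \<tau>)"
proof -
  have dN: "((\<lambda>\<tau>. -(Q0 - 2*\<tau>*Q1 + \<tau>\<^sup>2*Q2)) has_real_derivative (2*Q1 - 2*\<tau>*Q2)) (at \<tau>)"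
    by (auto intro!: derivative_eq_intros simp: algebra_simps)
  have dC: "((\<lambda>\<tau>. 2*(a+\<tau>*\<delta>)) has_real_derivative (2*\<delta>)) (at \<tau>)"
    by (auto intro!: derivative_eq_intros)
  have A: "((\<lambda>\<tau>. -(Q0 - 2*\<tau>*Q1 + \<tau>\<^sup>2*Q2)/(2*(a+\<tau>*\<delta>))) has_real_derivative
      (((2*Q1 - 2*\<tau>*Q2)*(2*(a+\<tau>*\<delta>)) - (-(Q0 - 2*\<tau>*Q1 + \<tau>\<^sup>2*Q2))*(2*\<delta>))/((2*(a+\<tau>*\<delta>))*(2*(a+\<tau>*\<delta>))))) (at \<tau>)"
    using DERIV_divide[OF dN dC] c by simp
  have B: "((\<lambda>\<tau>. m*ln(a+\<tau>*\<delta>)) has_real_derivative (m*\<delta>/(a+\<tau>*\<delta>))) (at \<tau>)"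
    using c by (auto intro!: derivative_eq_intros)
  from DERIV_diff[OF A B] show ?thesis by simp
qed

lemma deriv_g:
  fixes A1 B1 :: real and M M' :: "real \<Rightarrow> real"
  assumes "(M has_real_derivative M' \<tau>) (at \<tau>)"
  shows "((\<lambda>\<tau>. (A1 - \<tau>*B1) * exp (M \<tau>)) has_real_derivative
      ((-B1 + (A1 - \<tau>*B1) * M' \<tau>) * exp (M \<tau>))) (at \<tau>)"
  using assms by (auto intro!: derivative_eq_intros simp: algebra_simps)


lemma abstr0:
  fixes \<sigma> \<rho> d m :: real
  assumes "0 \<le> \<sigma>" "0 \<le> \<rho>" "0 \<le> d" "0 \<le> m"
  shows "exp (-\<sigma>\<^sup>2/2) * (\<rho> + \<sigma>*(\<sigma>*\<rho> + \<sigma>\<^sup>2*d/2 + m*d)) \<le> 27*(1+m)*exp (-\<sigma>\<^sup>2/4)*(\<rho>+d)"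
proof -
  define T where "T = (1+\<sigma>)^3"
  have s2: "0 \<le> \<sigma>\<^sup>2" "0 \<le> \<sigma>^3" using assms by auto
  have T: "T = 1 + 3*\<sigma> + 3*\<sigma>\<^sup>2 + \<sigma>^3" unfolding T_def by (simp add: power3_eq_cube power2_eq_square algebra_simps)
  have h1: "1 + \<sigma>\<^sup>2 \<le> (1+m)*T"
  proof -
    have "1 + \<sigma>\<^sup>2 \<le> T" using T s2 assms by linarith
    also have "T \<le> (1+m)*T" using assms T s2 by (simp add: algebra_simps)
    finally show ?thesis .
  qed
  have h2: "\<sigma>^3/2 + m*\<sigma> \<le> (1+m)*T"
  proof -
    have "m*\<sigma> \<le> m*T" using T s2 assms by (intro mult_left_mono) auto
    moreover have "\<sigma>^3/2 \<le> T" using T s2 assms by linarith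
    ultimately show ?thesis by (simp add: algebra_simps)
  qed
  have "\<rho> + \<sigma>*(\<sigma>*\<rho> + \<sigma>\<^sup>2*d/2 + m*d) = \<rho>*(1+\<sigma>\<^sup>2) + d*(\<sigma>^3/2 + m*\<sigma>)"
    by (simp add: power2_eq_square power3_eq_cube algebra_simps)
  also have "\<dots> \<le> \<rho>*((1+m)*T) + d*((1+m)*T)"
    using h1 h2 assms by (intro add_mono mult_left_mono) auto
  finally have P: "\<rho> + \<sigma>*(\<sigma>*\<rho> + \<sigma>\<^sup>2*d/2 + m*d) \<le> (1+m)*(\<rho>+d)*T" by (simp add: algebra_simps)
  have "exp (-\<sigma>\<^sup>2/2) * (\<rho> + \<sigma>*(\<sigma>*\<rho> + \<sigma>\<^sup>2*d/2 + m*d)) \<le> exp (-\<sigma>\<^sup>2/2) * ((1+m)*(\<rho>+d)*T)"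
    by (rule mult_left_mono[OF P]) simp
  also have "\<dots> = (1+m)*(\<rho>+d) * (T * exp (-\<sigma>\<^sup>2/2))" by simp
  also have "\<dots> \<le> (1+m)*(\<rho>+d) * (27 * exp (-\<sigma>\<^sup>2/4))"
    using cube_exp[OF assms(1)] assms unfolding T_def by (intro mult_left_mono) auto
  finally show ?thesis by (simp add: algebra_simps)
qed


lemma norm_sq_line:
  fixes u h :: "'a::real_inner"
  shows "(norm (u - \<tau> *\<^sub>R h))\<^sup>2 = (norm u)\<^sup>2 - 2*\<tau>*(u \<bullet> h) + \<tau>\<^sup>2*(norm h)\<^sup>2"
  unfolding power2_norm_eq_inner by (simp add: inner_diff_left inner_diff_right inner_commute power2_eq_square algebra_simps)

lemma conv_sigma:
  fixes Y H \<delta> c m :: real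
  assumes c: "c > 0"
  shows "H + Y*(Y*H/c + Y\<^sup>2*\<delta>/(2*c\<^sup>2) + m*\<delta>/c)
     = sqrt c * ((H/sqrt c) + (Y/sqrt c)*((Y/sqrt c)*(H/sqrt c) + (Y/sqrt c)\<^sup>2*(\<delta>/c)/2 + m*(\<delta>/c)))"
proof -
  define s where "s = sqrt c"
  have s: "s > 0" "c = s\<^sup>2" using c by (auto simp: s_def)
  show ?thesis unfolding s_def[symmetric] using s(1) unfolding s(2)
    by (simp add: field_simps power2_eq_square)
qed

lemma near_diff:
  fixes u h :: "real^'q"
  assumes a: "a > 0" and ab: "a \<le> b"
  shows "\<exists>\<tau>. 0 \<le> \<tau> \<and> \<tau> \<le> 1 \<and>
    \<bar>heat_kernel_d a l u - heat_kernel_d b l (u - h)\<bar>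
      \<le> 27*(real CARD('q)/2 + 2) * (a+\<tau>*(b-a)) powr (-(real CARD('q)+1)/2)
         * exp (-(norm (u - \<tau> *\<^sub>R h))\<^sup>2/(4*(a+\<tau>*(b-a))))
         * (norm h / sqrt (a+\<tau>*(b-a)) + (b-a)/(a+\<tau>*(b-a)))"
proof -
  define n where "n = real CARD('q)"
  define \<delta> where "\<delta> = b - a"
  define Q0 where "Q0 = (norm u)\<^sup>2"
  define Q1 where "Q1 = u \<bullet> h"
  define Q2 where "Q2 = (norm h)\<^sup>2"
  define m where "m = n/2 + 1"
  define k where "k = (2*pi) powr (- n / 2)"
  define M where "M \<tau> = -(Q0 - 2*\<tau>*Q1 + \<tau>\<^sup>2*Q2)/(2*(a+\<tau>*\<delta>)) - m*ln(a+\<tau>*\<delta>)" for \<tau>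
  define M' where "M' \<tau> = ((2*Q1 - 2*\<tau>*Q2)*(2*(a+\<tau>*\<delta>)) - (-(Q0 - 2*\<tau>*Q1 + \<tau>\<^sup>2*Q2))*(2*\<delta>))/((2*(a+\<tau>*\<delta>))*(2*(a+\<tau>*\<delta>)))
        - m*\<delta>/(a+\<tau>*\<delta>)" for \<tau>
  define G where "G \<tau> = (u $ l - \<tau> * h $ l) * exp (M \<tau>)" for \<tau>
  define G' where "G' \<tau> = (- h $ l + (u $ l - \<tau> * h $ l) * M' \<tau>) * exp (M \<tau>)" for \<tau>
  have d0: "0 \<le> \<delta>" using ab by (simp add: \<delta>_def)
  have k: "0 \<le> k" "k \<le> 1" using kconst_le1[where 'q='q] by (auto simp: k_def n_def)
  have cpos: "a + \<tau>*\<delta> > 0" if "0 \<le> \<tau>" for \<tau>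
    using a d0 that by (simp add: add_pos_nonneg)
  have form: "heat_kernel_d (a+\<tau>*\<delta>) l (u - \<tau> *\<^sub>R h) = - k * G \<tau>" if "0 \<le> \<tau>" for \<tau>
    unfolding hk_form[OF cpos[OF that]] G_def M_def k_def n_def m_def norm_sq_line Q0_def Q1_def Q2_def
    by simp
  have dG: "(G has_real_derivative G' \<tau>) (at \<tau>)" if "0 \<le> \<tau>" for \<tau>
    unfolding G_def G'_def
    by (rule deriv_g) (unfold M_def M'_def, rule deriv_M[OF cpos[OF that]])
  obtain z where z: "0 < z" "z < 1" "G 1 - G 0 = (1 - 0) * G' z"
    using MVT2[of 0 1 G G'] dG by auto
  have "heat_kernel_d a l u - heat_kernel_d b l (u - h) = k * G' z"
  proof -
    have "heat_kernel_d a l u = - k * G 0" using form[of 0] by simp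
    moreover have "heat_kernel_d b l (u - h) = - k * G 1" using form[of 1] by (simp add: \<delta>_def)
    ultimately show ?thesis using z(3) by (simp add: algebra_simps)
  qed
  hence diff: "\<bar>heat_kernel_d a l u - heat_kernel_d b l (u - h)\<bar> \<le> \<bar>G' z\<bar>"
    using k by (simp add: abs_mult mult_left_le_one_le)
  define c where "c = a + z*\<delta>"
  define y where "y = u - z *\<^sub>R h"
  define Y where "Y = norm y"
  define H where "H = norm h"
  have c: "c > 0" using cpos[of z] z by (simp add: c_def)
  have Y0: "0 \<le> Y" and H0: "0 \<le> H" by (auto simp: Y_def H_def)
  have e1: "u $ l - z * h $ l = y $ l" by (simp add: y_def)
  have e2: "Q1 - z*Q2 = y \<bullet> h" by (simp add: y_def Q1_def Q2_def inner_diff_left power2_norm_eq_inner)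
  have e3: "Q0 - 2*z*Q1 + z\<^sup>2*Q2 = Y\<^sup>2" by (simp add: Y_def y_def norm_sq_line Q0_def Q1_def Q2_def)
  have EM: "exp (M z) = exp (-Y\<^sup>2/(2*c)) * exp (- m * ln c)"
    unfolding M_def e3 c_def[symmetric] exp_add[symmetric] by simp
  have M'eq: "M' z = (y \<bullet> h)/c + Y\<^sup>2*\<delta>/(2*c\<^sup>2) - m*\<delta>/c"
  proof -
    have "M' z = ((2*(y \<bullet> h))*(2*c) + Y\<^sup>2*(2*\<delta>))/((2*c)*(2*c)) - m*\<delta>/c"
      unfolding M'_def c_def[symmetric] e3[symmetric] e2[symmetric] by (simp add: algebra_simps)
    also have "\<dots> = (y \<bullet> h)/c + Y\<^sup>2*\<delta>/(2*c\<^sup>2) - m*\<delta>/c"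
      using c by (simp add: field_simps power2_eq_square)
    finally show ?thesis .
  qed
  have m0: "0 \<le> m" by (simp add: m_def n_def)
  have M'b: "\<bar>M' z\<bar> \<le> Y*H/c + Y\<^sup>2*\<delta>/(2*c\<^sup>2) + m*\<delta>/c"
  proof -
    have "\<bar>y \<bullet> h\<bar> \<le> Y*H" unfolding Y_def H_def by (rule Cauchy_Schwarz_ineq2)
    hence "\<bar>y \<bullet> h\<bar>/c \<le> Y*H/c" using c by (rule divide_right_mono[OF _ less_imp_le])
    moreover have "\<bar>(y \<bullet> h)/c\<bar> = \<bar>y \<bullet> h\<bar>/c" using c by simp
    moreover have "0 \<le> Y\<^sup>2*\<delta>/(2*c\<^sup>2)" using c d0 by (intro divide_nonneg_pos mult_nonneg_nonneg) auto
    moreover have "0 \<le> m*\<delta>/c" using c d0 m0 by (intro divide_nonneg_pos mult_nonneg_nonneg) auto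
    ultimately show ?thesis unfolding M'eq by linarith
  qed
  have G'b: "\<bar>G' z\<bar> \<le> (H + Y*(Y*H/c + Y\<^sup>2*\<delta>/(2*c\<^sup>2) + m*\<delta>/c)) * exp (-Y\<^sup>2/(2*c)) * exp (- m * ln c)"
  proof -
    have "\<bar>G' z\<bar> = \<bar>- h $ l + y $ l * M' z\<bar> * exp (M z)" unfolding G'_def e1 by (simp add: abs_mult)
    also have "\<bar>- h $ l + y $ l * M' z\<bar> \<le> H + Y*(Y*H/c + Y\<^sup>2*\<delta>/(2*c\<^sup>2) + m*\<delta>/c)"
    proof -
      have "\<bar>- h $ l + y $ l * M' z\<bar> \<le> \<bar>h $ l\<bar> + \<bar>y $ l\<bar> * \<bar>M' z\<bar>"
        using abs_triangle_ineq[of "- h $ l" "y $ l * M' z"] by (simp add: abs_mult)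
      also have "\<dots> \<le> H + Y*(Y*H/c + Y\<^sup>2*\<delta>/(2*c\<^sup>2) + m*\<delta>/c)"
      proof (rule add_mono)
        show "\<bar>h $ l\<bar> \<le> H" unfolding H_def by (rule component_le_norm_cart)
        show "\<bar>y $ l\<bar> * \<bar>M' z\<bar> \<le> Y*(Y*H/c + Y\<^sup>2*\<delta>/(2*c\<^sup>2) + m*\<delta>/c)"
          by (rule mult_mono[OF _ M'b]) (auto simp: Y_def component_le_norm_cart)
      qed
      finally show ?thesis .
    qed
    hence "\<bar>- h $ l + y $ l * M' z\<bar> * exp (M z) \<le> (H + Y*(Y*H/c + Y\<^sup>2*\<delta>/(2*c\<^sup>2) + m*\<delta>/c)) * exp (M z)"
      by (rule mult_right_mono) simp
    finally show ?thesis unfolding EM by (simp add: mult.assoc)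
  qed
  define \<sigma> where "\<sigma> = Y / sqrt c"
  define \<rho> where "\<rho> = H / sqrt c"
  define dd where "dd = \<delta> / c"
  have sg: "0 \<le> \<sigma>" "0 \<le> \<rho>" "0 \<le> dd" using Y0 H0 c d0 by (auto simp: \<sigma>_def \<rho>_def dd_def)
  have sq2: "-Y\<^sup>2/(2*c) = -\<sigma>\<^sup>2/2" "-Y\<^sup>2/(4*c) = -\<sigma>\<^sup>2/4" using c by (auto simp: \<sigma>_def power_divide)
  have "(H + Y*(Y*H/c + Y\<^sup>2*\<delta>/(2*c\<^sup>2) + m*\<delta>/c)) * exp (-Y\<^sup>2/(2*c))
     = sqrt c * (exp (-\<sigma>\<^sup>2/2) * (\<rho> + \<sigma>*(\<sigma>*\<rho> + \<sigma>\<^sup>2*dd/2 + m*dd)))"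
    unfolding conv_sigma[OF c, of H Y \<delta> m] sq2 \<sigma>_def \<rho>_def dd_def by (simp add: algebra_simps)
  also have "\<dots> \<le> sqrt c * (27*(1+m)*exp (-\<sigma>\<^sup>2/4)*(\<rho>+dd))"
    using abstr0[OF sg m0] c by (intro mult_left_mono) auto
  finally have A: "(H + Y*(Y*H/c + Y\<^sup>2*\<delta>/(2*c\<^sup>2) + m*\<delta>/c)) * exp (-Y\<^sup>2/(2*c))
     \<le> sqrt c * (27*(1+m)*exp (-\<sigma>\<^sup>2/4)*(\<rho>+dd))" .
  have sL: "sqrt c * exp (- m * ln c) = c powr (-(n+1)/2)"
    using c by (simp add: sqrt_exp_ln m_def powr_def exp_add[symmetric] field_simps)
  have "\<bar>G' z\<bar> \<le> sqrt c * (27*(1+m)*exp (-\<sigma>\<^sup>2/4)*(\<rho>+dd)) * exp (- m * ln c)"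
    by (rule order_trans[OF G'b mult_right_mono[OF A]]) simp
  also have "\<dots> = 27*(1+m) * (sqrt c * exp (- m * ln c)) * exp (-Y\<^sup>2/(4*c)) * (\<rho>+dd)"
    unfolding sq2 by (simp add: algebra_simps)
  also have "\<dots> = 27*(n/2+2) * c powr (-(n+1)/2) * exp (-Y\<^sup>2/(4*c)) * (H / sqrt c + \<delta>/c)"
    unfolding sL by (simp add: m_def \<rho>_def dd_def)
  finally have "\<bar>heat_kernel_d a l u - heat_kernel_d b l (u - h)\<bar> \<le> 27*(n/2+2) * c powr (-(n+1)/2) * exp (-Y\<^sup>2/(4*c)) * (H / sqrt c + \<delta>/c)"
    using diff by linarith
  thus ?thesis using z by (intro exI[of _ z]) (auto simp: n_def c_def Y_def y_def H_def \<delta>_def)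
qed


lemma exp_mono_div:
  fixes Y c d :: real
  assumes "0 < c" "c \<le> d"
  shows "exp (- Y\<^sup>2 / c) \<le> exp (- Y\<^sup>2 / d)"
proof -
  have "Y\<^sup>2 / d \<le> Y\<^sup>2 / c" using assms by (intro divide_left_mono) auto
  thus ?thesis by simp
qed

lemma near_bound:
  fixes u h :: "real^'q"
  assumes a: "a > 0" and ab: "a \<le> b" and b2: "b \<le> 2*a" and ha: "(norm h)\<^sup>2 \<le> a"
  shows "\<exists>y. norm (u - y) \<le> norm h \<and>
    \<bar>heat_kernel_d a l u - heat_kernel_d b l (u - h)\<bar>
      \<le> 27*(real CARD('q)/2 + 2) * a powr (-(real CARD('q)+1)/2) * exp (-(norm y)\<^sup>2/(8*a))
         * (norm h / sqrt a + (b-a)/a)"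
proof -
  obtain \<tau> where t: "0 \<le> \<tau>" "\<tau> \<le> 1" and D:
    "\<bar>heat_kernel_d a l u - heat_kernel_d b l (u - h)\<bar>
      \<le> 27*(real CARD('q)/2 + 2) * (a+\<tau>*(b-a)) powr (-(real CARD('q)+1)/2)
         * exp (-(norm (u - \<tau> *\<^sub>R h))\<^sup>2/(4*(a+\<tau>*(b-a))))
         * (norm h / sqrt (a+\<tau>*(b-a)) + (b-a)/(a+\<tau>*(b-a)))"
    using near_diff[OF a ab, of l u h] by blast
  define c where "c = a+\<tau>*(b-a)"
  define y where "y = u - \<tau> *\<^sub>R h"
  have ca: "a \<le> c" using t ab by (simp add: c_def)
  have cb: "c \<le> b"
  proof -
    have "\<tau>*(b-a) \<le> 1*(b-a)" using t ab by (intro mult_right_mono) auto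
    thus ?thesis by (simp add: c_def)
  qed
  have c0: "0 < c" using ca a by simp
  have 1: "c powr (-(real CARD('q)+1)/2) \<le> a powr (-(real CARD('q)+1)/2)"
    by (rule powr_mono2') (use a ca in auto)
  have 2: "exp (-(norm y)\<^sup>2/(4*c)) \<le> exp (-(norm y)\<^sup>2/(8*a))"
    by (rule exp_mono_div) (use c0 cb b2 in auto)
  have 3: "norm h / sqrt c + (b-a)/c \<le> norm h / sqrt a + (b-a)/a"
    using a ca ab by (intro add_mono divide_left_mono) (auto intro: mult_pos_pos)
  have "\<bar>heat_kernel_d a l u - heat_kernel_d b l (u - h)\<bar>
      \<le> 27*(real CARD('q)/2 + 2) * a powr (-(real CARD('q)+1)/2) * exp (-(norm y)\<^sup>2/(8*a))
         * (norm h / sqrt a + (b-a)/a)"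
    using D unfolding c_def[symmetric] y_def[symmetric]
    apply (rule order_trans)
    apply (intro mult_mono 1 2 3)
    using c0 a ab by (auto intro!: add_nonneg_nonneg divide_nonneg_nonneg)
  moreover have "norm (u - y) \<le> norm h" using t by (simp add: y_def mult_left_le_one_le)
  ultimately show ?thesis by blast
qed


lemma Ex_bound:
  fixes U a b \<eta>0 :: real
  assumes a: "0 < a" and ab: "a \<le> b" and U: "b powr (1/2 - \<eta>0) < U"
  shows "exp (- U\<^sup>2/(64*a)) \<le> exp (- (b powr (-2*\<eta>0))/64)"
proof -
  have b: "0 < b" using a ab by simp
  have "b powr (1 - 2*\<eta>0) = (b powr (1/2 - \<eta>0))\<^sup>2"
    by (simp add: powr_power[symmetric] algebra_simps power2_eq_square powr_add[symmetric])
  also have "\<dots> \<le> U\<^sup>2" using U by (intro power_mono) auto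
  finally have 1: "b powr (1 - 2*\<eta>0) \<le> U\<^sup>2" .
  have "b powr (-2*\<eta>0) = b powr (1 - 2*\<eta>0) / b"
  proof -
    have "b powr (1 - 2*\<eta>0) / b = b powr (1 - 2*\<eta>0) / b powr 1" using b by simp
    also have "\<dots> = b powr ((1 - 2*\<eta>0) - 1)" by (rule powr_diff[symmetric])
    finally show ?thesis by simp
  qed
  also have "\<dots> \<le> U\<^sup>2 / b" using 1 b by (simp add: divide_right_mono)
  also have "\<dots> \<le> U\<^sup>2 / a" using a ab by (intro divide_left_mono) auto
  finally have "b powr (-2*\<eta>0)/64 \<le> U\<^sup>2/(64*a)" by simp
  thus ?thesis by simp
qed

lemma exp_split:
  fixes Y c :: real
  assumes c: "0 < c"
  shows "exp (- Y\<^sup>2/(4*c)) \<le> exp (- Y\<^sup>2/(64*c)) * exp (- Y\<^sup>2/(64*c))"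
proof -
  have "- Y\<^sup>2/(4*c) \<le> - Y\<^sup>2/(64*c) + - Y\<^sup>2/(64*c)" using c by (simp add: field_simps)
  thus ?thesis by (simp add: exp_add[symmetric])
qed

lemma vbound:
  fixes u h :: "real^'q"
  assumes a: "a > 0" and ab: "a \<le> b"
  shows "\<bar>heat_kernel_d a l u - heat_kernel_d b l (u - h)\<bar>
    \<le> 27*(real CARD('q)/2 + 2)*exp (1/8)
       * (if b \<le> 2*a \<and> (norm h)\<^sup>2 \<le> a then norm h / sqrt a + (b-a)/a else 1)
       * (a powr (-(real CARD('q)+1)/2) * exp (-(norm u)\<^sup>2/(16*a))
          + b powr (-(real CARD('q)+1)/2) * exp (-(norm (u - h))\<^sup>2/(16*b)))"
    (is "?D \<le> ?K * ?S * (?A + ?B)")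
proof -
  have b: "0 < b" using a ab by simp
  have K1: "1 \<le> ?K"
  proof -
    have "1 \<le> 27*(real CARD('q)/2 + 2)" by simp
    also have "\<dots> \<le> 27*(real CARD('q)/2 + 2) * exp (1/8)" by simp
    finally show ?thesis .
  qed
  have A0: "0 \<le> ?A" and B0: "0 \<le> ?B" by auto
  show ?thesis
  proof (cases "b \<le> 2*a \<and> (norm h)\<^sup>2 \<le> a")
    case True
    hence S: "?S = norm h / sqrt a + (b-a)/a" by simp
    have S0: "0 \<le> norm h / sqrt a + (b-a)/a" using a ab by auto
    obtain y where y: "norm (u - y) \<le> norm h" and D:
      "?D \<le> 27*(real CARD('q)/2 + 2) * a powr (-(real CARD('q)+1)/2) * exp (-(norm y)\<^sup>2/(8*a))
         * (norm h / sqrt a + (b-a)/a)"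
      using near_bound[OF a ab, of h u l] True by blast
    have "norm u \<le> norm y + norm h" using y norm_triangle_ineq[of y "u - y"] by simp
    hence "(norm u)\<^sup>2 \<le> (norm y + norm h)\<^sup>2" by (intro power_mono) auto
    also have "\<dots> \<le> 2*(norm y)\<^sup>2 + 2*(norm h)\<^sup>2"
      using sum_squares_bound[of "norm y" "norm h"] by (simp add: power2_sum algebra_simps)
    finally have "(norm u)\<^sup>2 \<le> 2*(norm y)\<^sup>2 + 2*a" using True by linarith
    hence "-(norm y)\<^sup>2/(8*a) \<le> 1/8 + -(norm u)\<^sup>2/(16*a)" using a by (simp add: field_simps)
    hence "exp (-(norm y)\<^sup>2/(8*a)) \<le> exp (1/8) * exp (-(norm u)\<^sup>2/(16*a))"
      by (simp add: exp_add[symmetric])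
    hence "?D \<le> 27*(real CARD('q)/2 + 2) * a powr (-(real CARD('q)+1)/2) * (exp (1/8) * exp (-(norm u)\<^sup>2/(16*a)))
         * (norm h / sqrt a + (b-a)/a)"
      using D S0 by (elim order_trans) (intro mult_right_mono mult_left_mono, auto)
    also have "\<dots> = ?K * ?S * ?A" unfolding S by (simp add: algebra_simps)
    also have "\<dots> \<le> ?K * ?S * (?A + ?B)" using B0 S0 K1 S by (intro mult_left_mono) auto
    finally show ?thesis .
  next
    case False
    hence S: "?S = 1" by (rule if_not_P)
    have "?D \<le> \<bar>heat_kernel_d a l u\<bar> + \<bar>heat_kernel_d b l (u - h)\<bar>" by (rule abs_triangle_ineq4)
    also have "\<dots> \<le> a powr (-(real CARD('q)+1)/2) * exp (- (norm u)\<^sup>2 / (4*a))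
                   + b powr (-(real CARD('q)+1)/2) * exp (- (norm (u-h))\<^sup>2 / (4*b))"
      by (intro add_mono hk_bound a b)
    also have "\<dots> \<le> ?A + ?B"
      by (intro add_mono mult_left_mono exp_mono_div) (use a b in auto)
    also have "\<dots> \<le> ?K * ?S * (?A + ?B)" unfolding S
      using mult_right_mono[OF K1 add_nonneg_nonneg[OF A0 B0]] by simp
    finally show ?thesis .
  qed
qed


lemma ubound:
  fixes u h :: "real^'q"
  assumes a: "a > 0" and ab: "a \<le> b" and ub: "b powr (1/2 - \<eta>0) < norm u" and uh: "2 * norm h < norm u"
  shows "\<bar>heat_kernel_d a l u - heat_kernel_d b l (u - h)\<bar>
    \<le> 27*(real CARD('q)/2 + 2)*exp (1/8)
       * (if b \<le> 2*a \<and> (norm h)\<^sup>2 \<le> a then norm h / sqrt a + (b-a)/a else 1)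
       * exp (- (b powr (-2*\<eta>0))/64)
       * (a powr (-(real CARD('q)+1)/2) * exp (-(norm u)\<^sup>2/(64*a))
          + b powr (-(real CARD('q)+1)/2) * exp (-(norm (u - h))\<^sup>2/(64*b)))"
    (is "?D \<le> ?K * ?S * ?E * (?A + ?B)")
proof -
  have b: "0 < b" using a ab by simp
  have K1: "1 \<le> ?K"
  proof -
    have "1 \<le> 27*(real CARD('q)/2 + 2)" by simp
    also have "\<dots> \<le> 27*(real CARD('q)/2 + 2) * exp (1/8)" by simp
    finally show ?thesis .
  qed
  have A0: "0 \<le> ?A" and B0: "0 \<le> ?B" and E0: "0 \<le> ?E" by auto
  have Ea: "exp (-(norm u)\<^sup>2/(64*a)) \<le> ?E" by (rule Ex_bound[OF a ab ub])
  have Eb: "exp (-(norm u)\<^sup>2/(64*b)) \<le> ?E" by (rule Ex_bound[OF b order_refl ub])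
  have uh2: "norm u \<le> 2 * norm (u - h)"
    using norm_triangle_ineq2[of u h] uh by linarith
  show ?thesis
  proof (cases "b \<le> 2*a \<and> (norm h)\<^sup>2 \<le> a")
    case True
    hence S: "?S = norm h / sqrt a + (b-a)/a" by simp
    have S0: "0 \<le> norm h / sqrt a + (b-a)/a" using a ab by auto
    obtain y where y: "norm (u - y) \<le> norm h" and D:
      "?D \<le> 27*(real CARD('q)/2 + 2) * a powr (-(real CARD('q)+1)/2) * exp (-(norm y)\<^sup>2/(8*a))
         * (norm h / sqrt a + (b-a)/a)"
      using near_bound[OF a ab, of h u l] True by blast
    have "norm u \<le> norm y + norm h" using y norm_triangle_ineq[of y "u - y"] by simp
    hence "norm u \<le> 2 * norm y" using uh by linarith
    hence "(norm u)\<^sup>2 \<le> (2 * norm y)\<^sup>2" by (intro power_mono) auto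
    hence "-(norm y)\<^sup>2/(8*a) \<le> -(norm u)\<^sup>2/(64*a) + -(norm u)\<^sup>2/(64*a)" using a by (simp add: field_simps power_mult_distrib)
    hence "exp (-(norm y)\<^sup>2/(8*a)) \<le> exp (-(norm u)\<^sup>2/(64*a)) * exp (-(norm u)\<^sup>2/(64*a))"
      by (simp add: exp_add[symmetric])
    also have "\<dots> \<le> exp (-(norm u)\<^sup>2/(64*a)) * ?E" using Ea by (intro mult_left_mono) auto
    finally have ey: "exp (-(norm y)\<^sup>2/(8*a)) \<le> exp (-(norm u)\<^sup>2/(64*a)) * ?E" .
    have "?D \<le> 27*(real CARD('q)/2 + 2) * a powr (-(real CARD('q)+1)/2) * (exp (-(norm u)\<^sup>2/(64*a)) * ?E)
         * (norm h / sqrt a + (b-a)/a)"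
      using D S0 ey by (elim order_trans) (intro mult_right_mono mult_left_mono, auto)
    also have "\<dots> = 27*(real CARD('q)/2 + 2) * ?S * ?E * ?A" unfolding S by (simp add: algebra_simps)
    also have "\<dots> \<le> ?K * ?S * ?E * ?A" using S0 S A0 E0 by (intro mult_right_mono) auto
    also have "\<dots> \<le> ?K * ?S * ?E * (?A + ?B)" using B0 S0 K1 S E0 by (intro mult_left_mono) auto
    finally show ?thesis .
  next
    case False
    hence S: "?S = 1" by (rule if_not_P)
    have "?D \<le> \<bar>heat_kernel_d a l u\<bar> + \<bar>heat_kernel_d b l (u - h)\<bar>" by (rule abs_triangle_ineq4)
    also have "\<dots> \<le> a powr (-(real CARD('q)+1)/2) * exp (- (norm u)\<^sup>2 / (4*a))
                   + b powr (-(real CARD('q)+1)/2) * exp (- (norm (u-h))\<^sup>2 / (4*b))"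
      by (intro add_mono hk_bound a b)
    also have "\<dots> \<le> ?E * (?A + ?B)"
    proof -
      have 1: "exp (- (norm u)\<^sup>2 / (4*a)) \<le> exp (-(norm u)\<^sup>2/(64*a)) * ?E"
        using exp_split[OF a, of "norm u"] Ea
        by (elim order_trans) (intro mult_left_mono, auto)
      have "- (norm (u-h))\<^sup>2 / (4*b) \<le> -(norm (u-h))\<^sup>2/(64*b) + -(norm u)\<^sup>2/(64*b)"
      proof -
        have "(norm u)\<^sup>2 \<le> (2 * norm (u - h))\<^sup>2" using uh2 by (intro power_mono) auto
        hence "(norm u)\<^sup>2 \<le> 4 * (norm (u - h))\<^sup>2" by (simp add: power_mult_distrib)
        moreover have "0 \<le> (norm (u - h))\<^sup>2" by simp
        ultimately have "(norm u)\<^sup>2 \<le> 15 * (norm (u - h))\<^sup>2" by linarith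
        thus ?thesis using b by (simp add: field_simps)
      qed
      hence "exp (- (norm (u-h))\<^sup>2 / (4*b)) \<le> exp (-(norm (u-h))\<^sup>2/(64*b)) * exp (-(norm u)\<^sup>2/(64*b))"
        by (simp add: exp_add[symmetric])
      also have "\<dots> \<le> exp (-(norm (u-h))\<^sup>2/(64*b)) * ?E" using Eb by (intro mult_left_mono) auto
      finally have 2: "exp (- (norm (u-h))\<^sup>2 / (4*b)) \<le> exp (-(norm (u-h))\<^sup>2/(64*b)) * ?E" .
      have "a powr (-(real CARD('q)+1)/2) * exp (- (norm u)\<^sup>2 / (4*a)) \<le> a powr (-(real CARD('q)+1)/2) * (exp (-(norm u)\<^sup>2/(64*a)) * ?E)"
        using 1 by (intro mult_left_mono) auto
      moreover have "b powr (-(real CARD('q)+1)/2) * exp (- (norm (u-h))\<^sup>2 / (4*b)) \<le> b powr (-(real CARD('q)+1)/2) * (exp (-(norm (u-h))\<^sup>2/(64*b)) * ?E)"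
        using 2 by (intro mult_left_mono) auto
      ultimately show ?thesis by (simp add: algebra_simps)
    qed
    also have "\<dots> \<le> ?K * ?S * ?E * (?A + ?B)" unfolding S
      using mult_right_mono[OF K1 mult_nonneg_nonneg[OF E0 add_nonneg_nonneg[OF A0 B0]]] by (simp add: algebra_simps)
    finally show ?thesis .
  qed
qed


lemma powr_le_exp:
  fixes X p R :: real
  assumes "0 \<le> X" "0 \<le> p" "p \<le> R"
  shows "X powr p \<le> exp (R * X)"
proof (cases "X \<le> 1")
  case True
  have "X powr p \<le> 1"
  proof (cases "X = 0")
    case False thus ?thesis using True assms by (intro powr_le1) auto
  qed simp
  also have "1 \<le> exp (R * X)" using assms by simp
  finally show ?thesis .
next
  case False
  hence "X powr p \<le> X powr R" using assms by (intro powr_mono) auto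
  also have "\<dots> = exp (R * ln X)" using False by (simp add: powr_def)
  also have "\<dots> \<le> exp (R * X)" using False assms by (intro exp_mono mult_left_mono ln_le_minus_one[THEN order_trans]) auto
  finally show ?thesis .
qed

lemma absorb:
  fixes w x y0 :: "'a::real_normed_vector"
  assumes p: "0 \<le> p" "p \<le> R" and r: "0 \<le> r" "r \<le> R" and Hm: "norm (y0 - x) \<le> Hm"
    and c: "0 < c" "c \<le> Kc" and M: "0 < M"
  shows "norm (w - x) powr p * exp (r * norm (w - x)) * exp (- (norm (w - y0))\<^sup>2 / (M*c))
    \<le> exp (2*R*Hm + 2*R\<^sup>2*M*Kc) * exp (- (norm (w - y0))\<^sup>2 / (2*M*c))"
proof -
  define X where "X = norm (w - x)"
  define s where "s = norm (w - y0)"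
  have R0: "0 \<le> R" using p by simp
  have X: "X \<le> s + Hm" unfolding X_def s_def using norm_triangle_ineq[of "w - y0" "y0 - x"] Hm by simp
  have "norm (w - x) powr p * exp (r * norm (w - x)) \<le> exp (R * X) * exp (R * X)"
    unfolding X_def[symmetric] using p r
    by (intro mult_mono powr_le_exp) (auto simp: X_def intro!: mult_right_mono)
  also have "\<dots> = exp (2*R*X)" by (simp add: exp_add[symmetric])
  also have "\<dots> \<le> exp (2*R*(s + Hm))" using X R0 by (intro exp_mono mult_left_mono) auto
  finally have 1: "norm (w - x) powr p * exp (r * norm (w - x)) \<le> exp (2*R*(s + Hm))" .
  have amgm: "2*R * s \<le> s\<^sup>2/(2*M*c) + 2*R\<^sup>2*M*c"
  proof -
    have "0 \<le> (s - 2*R*M*c)\<^sup>2/(2*M*c)" using c M by simp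
    also have "(s - 2*R*M*c)\<^sup>2/(2*M*c) = s\<^sup>2/(2*M*c) - 2*R * s + 2*R\<^sup>2*M*c"
      using c M by (simp add: field_simps power2_eq_square)
    finally show ?thesis by simp
  qed
  have "2*R\<^sup>2*M*c \<le> 2*R\<^sup>2*M*Kc" using c M by (intro mult_left_mono) auto
  hence "2*R*(s + Hm) + - s\<^sup>2/(M*c) \<le> 2*R*Hm + 2*R\<^sup>2*M*Kc + - s\<^sup>2/(2*M*c)"
  proof -
    have e: "- s\<^sup>2/(M*c) = - 2*(s\<^sup>2/(2*M*c))" using c M by (simp add: field_simps)
    have d: "2*R*(s + Hm) = 2*R * s + 2*R*Hm" by (simp add: algebra_simps)
    show ?thesis unfolding e d using amgm \<open>2*R\<^sup>2*M*c \<le> 2*R\<^sup>2*M*Kc\<close> by linarith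
  qed
  hence 2: "exp (2*R*(s + Hm)) * exp (- s\<^sup>2/(M*c)) \<le> exp (2*R*Hm + 2*R\<^sup>2*M*Kc) * exp (- s\<^sup>2/(2*M*c))"
    by (simp add: exp_add[symmetric])
  show ?thesis unfolding s_def[symmetric]
    by (rule order_trans[OF mult_right_mono[OF 1] 2]) simp
qed


lemma vec_nth_measurable[measurable]: "(\<lambda>x::real^'q. x $ i) \<in> borel_measurable borel"
  by (intro borel_measurable_continuous_onI continuous_intros)

lemma dom_int:
  fixes F H :: "'a \<Rightarrow> real"
  assumes [measurable]: "F \<in> borel_measurable M"
    and dom: "\<And>x. \<bar>F x\<bar> \<le> H x" and I: "(\<integral>\<^sup>+x. ennreal (H x) \<partial>M) \<le> ennreal B" and B: "0 \<le> B"
  shows "integrable M F \<and> integral\<^sup>L M F \<le> B"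
proof -
  have le: "(\<integral>\<^sup>+x. ennreal (norm (F x)) \<partial>M) \<le> ennreal B"
    using dom by (intro order_trans[OF nn_integral_mono I]) (auto intro: ennreal_leI)
  have int: "integrable M F"
    by (rule integrableI_bounded) (use le in \<open>auto simp: top_unique[symmetric] ennreal_less_top intro: le_less_trans\<close>)
  have "integral\<^sup>L M F \<le> integral\<^sup>L M (\<lambda>x. norm (F x))"
    using integral_norm_bound[of M F] abs_ge_self[of "integral\<^sup>L M F"] unfolding real_norm_def by linarith
  also have "\<dots> \<le> B" by (rule integral_real_bounded[OF B]) (use le in simp)
  finally show ?thesis using int by simp
qed

lemma min_powr:
  fixes m e :: real
  assumes "0 \<le> m" "m \<le> 1" "0 < e" "e \<le> 1"
  shows "m \<le> m powr e"
proof (cases "m = 0")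
  case False
  have "m powr 1 \<le> m powr e" using assms by (intro powr_mono') auto
  thus ?thesis using False assms by simp
qed simp

lemma S2_bound:
  fixes H a b :: real
  assumes a: "0 < a" and ab: "a \<le> b" and H: "0 \<le> H"
  shows "(if b \<le> 2*a \<and> H\<^sup>2 \<le> a then H / sqrt a + (b-a)/a else 1)\<^sup>2 \<le> 4 * min 1 ((H\<^sup>2 + (b-a))/a)"
proof (cases "b \<le> 2*a \<and> H\<^sup>2 \<le> a")
  case True
  define X where "X = (H\<^sup>2 + (b-a))/a"
  have d1: "(b-a)/a \<le> 1" using True a by (simp add: field_simps)
  have d0: "0 \<le> (b-a)/a" using a ab by simp
  have "(H / sqrt a + (b-a)/a)\<^sup>2 \<le> 2*(H / sqrt a)\<^sup>2 + 2*((b-a)/a)\<^sup>2"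
    using sum_squares_bound[of "H / sqrt a" "(b-a)/a"] by (simp add: power2_sum algebra_simps)
  also have "2*(H / sqrt a)\<^sup>2 + 2*((b-a)/a)\<^sup>2 \<le> 2*X"
  proof -
    have dd: "((b-a)/a)\<^sup>2 \<le> (b-a)/a" unfolding power2_eq_square by (rule mult_left_le_one_le[OF d0 d0 d1])
    have hq: "(H / sqrt a)\<^sup>2 = H\<^sup>2/a" using a by (simp add: power_divide)
    have "2*(H\<^sup>2/a) + 2*((b-a)/a) = 2*X" by (simp add: X_def add_divide_distrib)
    thus ?thesis unfolding hq using dd by linarith
  qed
  finally have 1: "(H / sqrt a + (b-a)/a)\<^sup>2 \<le> 2*X" .
  have X2: "X \<le> 2" using True a by (simp add: X_def field_simps)
  have X0: "0 \<le> X" using a ab by (simp add: X_def)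
  have "2*X \<le> 4 * min 1 X" using X2 X0 by (cases "X \<le> 1") auto
  thus ?thesis using 1 True by (simp add: X_def)
next
  case False
  have "1 < (H\<^sup>2 + (b-a))/a"
  proof (cases "b \<le> 2*a")
    case True
    hence "a < H\<^sup>2" using False by auto
    thus ?thesis using a ab by (simp add: field_simps)
  next
    case False
    hence "a < H\<^sup>2 + (b-a)" using zero_le_power2[of H] by linarith
    thus ?thesis using a by (simp add: less_divide_eq)
  qed
  thus ?thesis unfolding if_not_P[OF False] by simp
qed


lemma prod_bound:
  fixes A B :: "'a::euclidean_space \<Rightarrow> real" and P :: "'a \<Rightarrow> 'a \<Rightarrow> real"
  assumes mA[measurable]: "A \<in> borel_measurable borel" and mB[measurable]: "B \<in> borel_measurable borel"
    and mP[measurable]: "(\<lambda>wz. P (fst wz) (snd wz)) \<in> borel_measurable (borel \<Otimes>\<^sub>M borel)"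
    and A0: "\<And>w. 0 \<le> A w" and B0: "\<And>z. 0 \<le> B z" and P0: "\<And>w z. 0 \<le> P w z" and Q0: "0 \<le> Q"
    and IA: "(\<integral>\<^sup>+w. ennreal (A w) \<partial>lborel) \<le> ennreal IA"
    and IB: "\<And>w. (\<integral>\<^sup>+z. ennreal (B z * P w z) \<partial>lborel) \<le> ennreal IB" and IB0: "0 \<le> IB" and IA0: "0 \<le> IA"
  shows "(\<integral>\<^sup>+wz. ennreal (Q * A (fst wz) * B (snd wz) * P (fst wz) (snd wz)) \<partial>lborel) \<le> ennreal (Q * IA * IB)"
proof -
  let ?f = "\<lambda>wz::'a\<times>'a. ennreal (Q * A (fst wz) * B (snd wz) * P (fst wz) (snd wz))"
  have mf0: "?f \<in> borel_measurable (borel \<Otimes>\<^sub>M borel)" by measurable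
  have mf: "?f \<in> borel_measurable (lborel \<Otimes>\<^sub>M lborel)"
    using mf0 by (subst measurable_cong_sets[OF sets_pair_measure_cong[OF sets_lborel sets_lborel] refl])
  have mPw[measurable]: "(\<lambda>z. P w z) \<in> borel_measurable borel" for w
    using measurable_Pair2[OF mP, of w] by simp
  have "(\<integral>\<^sup>+wz. ?f wz \<partial>lborel) = (\<integral>\<^sup>+wz. ?f wz \<partial>(lborel \<Otimes>\<^sub>M lborel))"
    by (simp add: lborel_prod)
  also have "\<dots> = (\<integral>\<^sup>+w. \<integral>\<^sup>+z. ?f (w, z) \<partial>lborel \<partial>lborel)"
    by (rule lborel.nn_integral_fst[symmetric, OF mf])
  also have "\<dots> \<le> (\<integral>\<^sup>+w. ennreal (Q * A w) * ennreal IB \<partial>lborel)"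
  proof (rule nn_integral_mono)
    fix w
    have "(\<integral>\<^sup>+z. ?f (w, z) \<partial>lborel) = (\<integral>\<^sup>+z. ennreal (Q * A w) * ennreal (B z * P w z) \<partial>lborel)"
      using A0 B0 P0 Q0 by (intro nn_integral_cong) (simp add: ennreal_mult[symmetric] mult.assoc)
    also have "\<dots> = ennreal (Q * A w) * (\<integral>\<^sup>+z. ennreal (B z * P w z) \<partial>lborel)"
      by (rule nn_integral_cmult) measurable
    also have "\<dots> \<le> ennreal (Q * A w) * ennreal IB" by (intro mult_left_mono IB) auto
    finally show "(\<integral>\<^sup>+z. ?f (w, z) \<partial>lborel) \<le> ennreal (Q * A w) * ennreal IB" .
  qed
  also have "\<dots> = ennreal IB * ennreal Q * (\<integral>\<^sup>+w. ennreal (A w) \<partial>lborel)"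
    using A0 Q0 by (subst nn_integral_cmult[symmetric]) (auto simp: ennreal_mult mult_ac intro!: nn_integral_cong)
  also have "\<dots> \<le> ennreal IB * ennreal Q * ennreal IA" by (intro mult_left_mono IA) auto
  also have "\<dots> = ennreal (IB * Q * IA)" using IB0 Q0 IA0 by (simp add: ennreal_mult)
  also have "IB * Q * IA = Q * IA * IB" by simp
  finally show ?thesis .
qed


lemma INT1q:
  fixes y0 :: "real^'q"
  assumes c: "c > 0" and M: "M > 0"
  shows "(\<integral>\<^sup>+w. ennreal (c powr (-(real CARD('q)+1)/2) * exp (- (norm (w - y0))\<^sup>2 / (M*c))) \<partial>lborel)
      = ennreal (c powr (-1/2) * (sqrt (M*pi)) ^ CARD('q))"
  using INT1'[OF c M, where 'a="real^'q", of y0] by simp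

lemma INT2q:
  fixes y0 u :: "real^'q" and \<alpha> :: real
  assumes c: "c > 0" and M: "M > 0" and a0: "0 < \<alpha>" and a1: "\<alpha> < CARD('q)"
  shows "(\<integral>\<^sup>+w. ennreal (c powr (-(real CARD('q)+1)/2) * exp (- (norm (w - y0))\<^sup>2 / (M*c)) * norm (u - w) powr (-\<alpha>)) \<partial>lborel)
      \<le> ennreal (c powr (-1/2 - \<alpha>/2) * (sqrt M ^ CARD('q) * sqrt M powr (-\<alpha>) * (2/(1-\<alpha>/CARD('q)) + sqrt pi) ^ CARD('q)))"
  using INT2'[OF c M a0, where 'a="real^'q", of y0 u] a1 by simp

lemma outer_bound:
  fixes x x' :: "real^'q"
  assumes a: "0 < a" and ab: "a \<le> b"
  shows "(\<integral>\<^sup>+w. ennreal (a powr (-(real CARD('q)+1)/2) * exp (- (norm (w - x))\<^sup>2 / (128*a))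
                     + b powr (-(real CARD('q)+1)/2) * exp (- (norm (w - x'))\<^sup>2 / (128*b))) \<partial>lborel)
     \<le> ennreal (a powr (-1/2) * (2 * sqrt (128*pi) ^ CARD('q)))"
proof -
  have b: "0 < b" using a ab by simp
  have "(\<integral>\<^sup>+w. ennreal (a powr (-(real CARD('q)+1)/2) * exp (- (norm (w - x))\<^sup>2 / (128*a))
                     + b powr (-(real CARD('q)+1)/2) * exp (- (norm (w - x'))\<^sup>2 / (128*b))) \<partial>lborel)
     = (\<integral>\<^sup>+w. ennreal (a powr (-(real CARD('q)+1)/2) * exp (- (norm (w - x))\<^sup>2 / (128*a))) \<partial>lborel)
       + (\<integral>\<^sup>+w. ennreal (b powr (-(real CARD('q)+1)/2) * exp (- (norm (w - x'))\<^sup>2 / (128*b))) \<partial>lborel)"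
    by (subst nn_integral_add[symmetric]) (auto intro!: nn_integral_cong simp: ennreal_plus)
  also have "\<dots> = ennreal (a powr (-1/2) * sqrt (128*pi) ^ CARD('q)) + ennreal (b powr (-1/2) * sqrt (128*pi) ^ CARD('q))"
    using INT1q[OF a, of 128 x] INT1q[OF b, of 128 x'] by simp
  also have "\<dots> = ennreal (a powr (-1/2) * sqrt (128*pi) ^ CARD('q) + b powr (-1/2) * sqrt (128*pi) ^ CARD('q))"
    by (simp add: ennreal_plus)
  also have "\<dots> \<le> ennreal (a powr (-1/2) * (2 * sqrt (128*pi) ^ CARD('q)))"
  proof (rule ennreal_leI)
    have "b powr (-1/2) \<le> a powr (-1/2)" using a ab by (intro powr_mono2') auto
    thus "a powr (-1/2) * sqrt (128*pi) ^ CARD('q) + b powr (-1/2) * sqrt (128*pi) ^ CARD('q) \<le> a powr (-1/2) * (2 * sqrt (128*pi) ^ CARD('q))"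
      using mult_right_mono[of "b powr (-1/2)" "a powr (-1/2)" "sqrt (128*pi) ^ CARD('q)"] by (simp add: algebra_simps)
  qed
  finally show ?thesis .
qed

lemma inner_bound:
  fixes x x' w :: "real^'q" and \<alpha> :: real
  assumes a: "0 < a" and ab: "a \<le> b" and bK: "b < K" and a0: "0 < \<alpha>" and a1: "\<alpha> < CARD('q)"
  shows "(\<integral>\<^sup>+z. ennreal ((a powr (-(real CARD('q)+1)/2) * exp (- (norm (z - x))\<^sup>2 / (32*a))
                     + b powr (-(real CARD('q)+1)/2) * exp (- (norm (z - x'))\<^sup>2 / (32*b)))
                     * (norm (w - z) powr (-\<alpha>) + 1)) \<partial>lborel)
     \<le> ennreal (a powr (-1/2 - \<alpha>/2) * (2 * (sqrt 32 ^ CARD('q) * sqrt 32 powr (-\<alpha>) * (2/(1-\<alpha>/CARD('q)) + sqrt pi) ^ CARD('q))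
                                       + 2 * K powr (\<alpha>/2) * sqrt (32*pi) ^ CARD('q)))"
proof -
  have b: "0 < b" using a ab by simp
  define T where "T = sqrt 32 ^ CARD('q) * sqrt 32 powr (-\<alpha>) * (2/(1-\<alpha>/CARD('q)) + sqrt pi) ^ CARD('q)"
  define P where "P = sqrt (32*pi) ^ CARD('q)"
  have T0: "0 \<le> T" using a1 by (simp add: T_def)
  have P0: "0 \<le> P" by (simp add: P_def)
  let ?ga = "\<lambda>z. a powr (-(real CARD('q)+1)/2) * exp (- (norm (z - x))\<^sup>2 / (32*a))"
  let ?gb = "\<lambda>z. b powr (-(real CARD('q)+1)/2) * exp (- (norm (z - x'))\<^sup>2 / (32*b))"
  let ?s = "\<lambda>z. norm (w - z) powr (-\<alpha>)"
  have eq: "ennreal ((?ga z + ?gb z) * (?s z + 1)) = ennreal (?ga z * ?s z) + ennreal (?gb z * ?s z) + ennreal (?ga z) + ennreal (?gb z)" for z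
    by (simp add: ennreal_plus[symmetric] algebra_simps del: ennreal_plus)
  have "(\<integral>\<^sup>+z. ennreal ((?ga z + ?gb z) * (?s z + 1)) \<partial>lborel)
      = (\<integral>\<^sup>+z. ennreal (?ga z * ?s z) \<partial>lborel) + (\<integral>\<^sup>+z. ennreal (?gb z * ?s z) \<partial>lborel)
        + (\<integral>\<^sup>+z. ennreal (?ga z) \<partial>lborel) + (\<integral>\<^sup>+z. ennreal (?gb z) \<partial>lborel)"
    unfolding eq by (simp add: nn_integral_add)
  also have "\<dots> \<le> ennreal (a powr (-1/2 - \<alpha>/2) * T) + ennreal (b powr (-1/2 - \<alpha>/2) * T)
        + ennreal (a powr (-1/2) * P) + ennreal (b powr (-1/2) * P)"
    using INT2q[OF a _ a0 a1, of 32 x w] INT2q[OF b _ a0 a1, of 32 x' w] INT1q[OF a, of 32 x] INT1q[OF b, of 32 x']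
    unfolding T_def P_def by (intro add_mono) auto
  also have "\<dots> = ennreal (a powr (-1/2 - \<alpha>/2) * T + b powr (-1/2 - \<alpha>/2) * T + a powr (-1/2) * P + b powr (-1/2) * P)"
    using T0 P0 by (simp add: ennreal_plus)
  also have "\<dots> \<le> ennreal (a powr (-1/2 - \<alpha>/2) * (2 * T + 2 * K powr (\<alpha>/2) * P))"
  proof (rule ennreal_leI)
    have 1: "b powr (-1/2 - \<alpha>/2) \<le> a powr (-1/2 - \<alpha>/2)" using a ab a0 by (intro powr_mono2') auto
    have 2: "b powr (-1/2) \<le> a powr (-1/2)" using a ab by (intro powr_mono2') auto
    have 3: "a powr (-1/2) \<le> a powr (-1/2 - \<alpha>/2) * K powr (\<alpha>/2)"
    proof -
      have "a powr (\<alpha>/2) \<le> K powr (\<alpha>/2)" using a ab bK a0 by (intro powr_mono2) auto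
      hence "a powr (-1/2 - \<alpha>/2) * a powr (\<alpha>/2) \<le> a powr (-1/2 - \<alpha>/2) * K powr (\<alpha>/2)"
        by (intro mult_left_mono) auto
      moreover have "a powr (-1/2 - \<alpha>/2) * a powr (\<alpha>/2) = a powr (-1/2)" by (simp add: powr_add[symmetric])
      ultimately show ?thesis by simp
    qed
    have "a powr (-1/2 - \<alpha>/2) * T + b powr (-1/2 - \<alpha>/2) * T \<le> 2 * (a powr (-1/2 - \<alpha>/2) * T)"
      using mult_right_mono[OF 1 T0] by linarith
    moreover have "a powr (-1/2) * P + b powr (-1/2) * P \<le> 2 * (a powr (-1/2 - \<alpha>/2) * K powr (\<alpha>/2) * P)"
      using mult_right_mono[OF 2 P0] mult_right_mono[OF 3 P0] by linarith
    ultimately show "a powr (-1/2 - \<alpha>/2) * T + b powr (-1/2 - \<alpha>/2) * T + a powr (-1/2) * P + b powr (-1/2) * P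
        \<le> a powr (-1/2 - \<alpha>/2) * (2 * T + 2 * K powr (\<alpha>/2) * P)"
      by (simp add: algebra_simps)
  qed
  finally show ?thesis unfolding T_def P_def .
qed


lemma ubound_abs:
  fixes w x x' :: "real^'q"
  assumes a: "0 < a" and ab: "a \<le> b" and bK: "b \<le> K" and p: "0 \<le> p" "p \<le> R" and r: "0 \<le> r" "r \<le> R"
    and Hm: "norm (x' - x) \<le> Hm" and H0: "0 \<le> Hm"
    and ub: "b powr (1/2 - \<eta>0) < norm (w - x)" and uh: "2 * norm (x' - x) < norm (w - x)"
  shows "norm (w - x) powr p * exp (r * norm (w - x)) * \<bar>heat_kernel_d a l (w - x) - heat_kernel_d b l (w - x')\<bar>
    \<le> 27*(real CARD('q)/2 + 2)*exp (1/8)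
       * (if b \<le> 2*a \<and> (norm (x' - x))\<^sup>2 \<le> a then norm (x' - x) / sqrt a + (b-a)/a else 1)
       * exp (- (b powr (-2*\<eta>0))/64) * exp (2*R*Hm + 2*R\<^sup>2*64*K)
       * (a powr (-(real CARD('q)+1)/2) * exp (-(norm (w - x))\<^sup>2/(128*a))
          + b powr (-(real CARD('q)+1)/2) * exp (-(norm (w - x'))\<^sup>2/(128*b)))"
    (is "?L \<le> ?K * ?S * ?E * ?C * (?A + ?B)")
proof -
  have b: "0 < b" using a ab by simp
  have eqd: "w - x - (x' - x) = w - x'" by (simp add: algebra_simps)
  have D: "\<bar>heat_kernel_d a l (w - x) - heat_kernel_d b l (w - x')\<bar>
     \<le> ?K * ?S * ?E * (a powr (-(real CARD('q)+1)/2) * exp (-(norm (w - x))\<^sup>2/(64*a))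
          + b powr (-(real CARD('q)+1)/2) * exp (-(norm (w - x'))\<^sup>2/(64*b)))"
    using ubound[OF a ab ub uh, of l] unfolding eqd .
  have S0: "0 \<le> ?S" using a ab by auto
  have KSE0: "0 \<le> ?K * ?S * ?E" using S0 by simp
  have pe0: "0 \<le> norm (w - x) powr p * exp (r * norm (w - x))" by simp
  have "?L \<le> norm (w - x) powr p * exp (r * norm (w - x)) * (?K * ?S * ?E * (a powr (-(real CARD('q)+1)/2) * exp (-(norm (w - x))\<^sup>2/(64*a))
          + b powr (-(real CARD('q)+1)/2) * exp (-(norm (w - x'))\<^sup>2/(64*b))))"
    by (rule mult_left_mono[OF D pe0])
  also have "\<dots> = ?K * ?S * ?E * (a powr (-(real CARD('q)+1)/2) * (norm (w - x) powr p * exp (r * norm (w - x)) * exp (-(norm (w - x))\<^sup>2/(64*a)))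
          + b powr (-(real CARD('q)+1)/2) * (norm (w - x) powr p * exp (r * norm (w - x)) * exp (-(norm (w - x'))\<^sup>2/(64*b))))"
    by (simp add: algebra_simps)
  also have "\<dots> \<le> ?K * ?S * ?E * (a powr (-(real CARD('q)+1)/2) * (?C * exp (-(norm (w - x))\<^sup>2/(2*64*a)))
          + b powr (-(real CARD('q)+1)/2) * (?C * exp (-(norm (w - x'))\<^sup>2/(2*64*b))))"
  proof -
    have 1: "norm (w - x) powr p * exp (r * norm (w - x)) * exp (-(norm (w - x))\<^sup>2/(64*a)) \<le> ?C * exp (-(norm (w - x))\<^sup>2/(2*64*a))"
      by (rule absorb[OF p r _ a _]) (use H0 ab bK in auto)
    have 2: "norm (w - x) powr p * exp (r * norm (w - x)) * exp (-(norm (w - x'))\<^sup>2/(64*b)) \<le> ?C * exp (-(norm (w - x'))\<^sup>2/(2*64*b))"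
      by (rule absorb[OF p r Hm b bK]) auto
    show ?thesis using KSE0 by (intro mult_left_mono add_mono 1 2) auto
  qed
  also have "\<dots> = ?K * ?S * ?E * ?C * (?A + ?B)" by (simp add: algebra_simps)
  finally show ?thesis .
qed

lemma vbound_abs:
  fixes z x x' :: "real^'q"
  assumes a: "0 < a" and ab: "a \<le> b" and bK: "b \<le> K" and p: "0 \<le> p" "p \<le> R" and r: "0 \<le> r" "r \<le> R"
    and Hm: "norm (x' - x) \<le> Hm" and H0: "0 \<le> Hm"
  shows "norm (z - x) powr p * exp (r * norm (z - x)) * \<bar>heat_kernel_d a l (z - x) - heat_kernel_d b l (z - x')\<bar>
    \<le> 27*(real CARD('q)/2 + 2)*exp (1/8)
       * (if b \<le> 2*a \<and> (norm (x' - x))\<^sup>2 \<le> a then norm (x' - x) / sqrt a + (b-a)/a else 1)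
       * exp (2*R*Hm + 2*R\<^sup>2*16*K)
       * (a powr (-(real CARD('q)+1)/2) * exp (-(norm (z - x))\<^sup>2/(32*a))
          + b powr (-(real CARD('q)+1)/2) * exp (-(norm (z - x'))\<^sup>2/(32*b)))"
    (is "?L \<le> ?K * ?S * ?C * (?A + ?B)")
proof -
  have b: "0 < b" using a ab by simp
  have eqd: "z - x - (x' - x) = z - x'" by (simp add: algebra_simps)
  have D: "\<bar>heat_kernel_d a l (z - x) - heat_kernel_d b l (z - x')\<bar>
     \<le> ?K * ?S * (a powr (-(real CARD('q)+1)/2) * exp (-(norm (z - x))\<^sup>2/(16*a))
          + b powr (-(real CARD('q)+1)/2) * exp (-(norm (z - x'))\<^sup>2/(16*b)))"
    using vbound[OF a ab, of l "z - x" "x' - x"] unfolding eqd .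
  have S0: "0 \<le> ?S" using a ab by auto
  have KS0: "0 \<le> ?K * ?S" using S0 by simp
  have pe0: "0 \<le> norm (z - x) powr p * exp (r * norm (z - x))" by simp
  have "?L \<le> norm (z - x) powr p * exp (r * norm (z - x)) * (?K * ?S * (a powr (-(real CARD('q)+1)/2) * exp (-(norm (z - x))\<^sup>2/(16*a))
          + b powr (-(real CARD('q)+1)/2) * exp (-(norm (z - x'))\<^sup>2/(16*b))))"
    by (rule mult_left_mono[OF D pe0])
  also have "\<dots> = ?K * ?S * (a powr (-(real CARD('q)+1)/2) * (norm (z - x) powr p * exp (r * norm (z - x)) * exp (-(norm (z - x))\<^sup>2/(16*a)))
          + b powr (-(real CARD('q)+1)/2) * (norm (z - x) powr p * exp (r * norm (z - x)) * exp (-(norm (z - x'))\<^sup>2/(16*b))))"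
    by (simp add: algebra_simps)
  also have "\<dots> \<le> ?K * ?S * (a powr (-(real CARD('q)+1)/2) * (?C * exp (-(norm (z - x))\<^sup>2/(2*16*a)))
          + b powr (-(real CARD('q)+1)/2) * (?C * exp (-(norm (z - x'))\<^sup>2/(2*16*b))))"
  proof -
    have 1: "norm (z - x) powr p * exp (r * norm (z - x)) * exp (-(norm (z - x))\<^sup>2/(16*a)) \<le> ?C * exp (-(norm (z - x))\<^sup>2/(2*16*a))"
      by (rule absorb[OF p r _ a _]) (use H0 ab bK in auto)
    have 2: "norm (z - x) powr p * exp (r * norm (z - x)) * exp (-(norm (z - x'))\<^sup>2/(16*b)) \<le> ?C * exp (-(norm (z - x'))\<^sup>2/(2*16*b))"
      by (rule absorb[OF p r Hm b bK]) auto
    show ?thesis using KS0 by (intro mult_left_mono add_mono 1 2) auto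
  qed
  also have "\<dots> = ?K * ?S * ?C * (?A + ?B)" by (simp add: algebra_simps)
  finally show ?thesis .
qed


theorem lemma4p5:
  fixes \<alpha> :: real
  assumes "0 < \<alpha>" "\<alpha> < min 2 (real CARD('q))"
  shows "\<forall>R K. R > 2 \<longrightarrow> K > 0 \<longrightarrow> (\<exists>C::real. \<forall>(p::real) (r::real) (\<eta>0::real) (\<eta>1::real) (l::'q)
           (s::real) (t::real) (t'::real) (x::real^'q) (x'::real^'q).
      0 \<le> p \<longrightarrow> p \<le> R \<longrightarrow> 0 \<le> r \<longrightarrow> r \<le> R \<longrightarrow>
      1/R < \<eta>0 \<longrightarrow> \<eta>0 < 1/2 \<longrightarrow> 1/R < \<eta>1 \<longrightarrow> \<eta>1 < 1/2 \<longrightarrow>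
      0 \<le> s \<longrightarrow> s < t \<longrightarrow> t \<le> t' \<longrightarrow> t' < K \<longrightarrow>
      (\<forall>i. \<bar>x $ i\<bar> \<le> K) \<longrightarrow> (\<forall>i. \<bar>x' $ i\<bar> \<le> K) \<longrightarrow>
      (let F = (\<lambda>(w::real^'q, z::real^'q).
                  norm (w - x) powr p * norm (z - x) powr p
                  * (heat_kernel_d (t - s) l (w - x) - heat_kernel_d (t' - s) l (w - x'))
                  * (heat_kernel_d (t - s) l (z - x) - heat_kernel_d (t' - s) l (z - x'))
                  * (if norm (w - x) > max ((t' - s) powr (1/2 - \<eta>0)) (2 * norm (x - x')) then 1 else 0)
                  * exp (r * norm (w - x) + r * norm (z - x))
                  * (norm (w - z) powr (- \<alpha>) + 1))
       in integrable lborel F \<and>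
          (\<integral>wz. F wz \<partial>lborel) \<le>
            C * (t - s) powr (-1 - \<alpha>/2) * exp (- \<eta>1 * (t' - s) powr (-2 * \<eta>0) / 256)
              * (min 1 (((norm (x - x'))\<^sup>2 + \<bar>t - t'\<bar>) / (t - s))) powr (1 - \<eta>1/2)))"
proof (intro allI impI)
  fix R K :: real
  assume R: "R > 2" and K: "K > 0"
  have al0: "0 < \<alpha>" and al1: "\<alpha> < real CARD('q)" using assms by auto
  define Kd where "Kd = 27*(real CARD('q)/2 + 2)*exp (1/8)"
  define Hm where "Hm = 2*K*real CARD('q)"
  define CU where "CU = exp (2*R*Hm + 2*R\<^sup>2*64*K)"
  define CV where "CV = exp (2*R*Hm + 2*R\<^sup>2*16*K)"
  define Cout where "Cout = 2 * sqrt (128*pi) ^ CARD('q)"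
  define Cin where "Cin = 2 * (sqrt 32 ^ CARD('q) * sqrt 32 powr (-\<alpha>) * (2/(1-\<alpha>/CARD('q)) + sqrt pi) ^ CARD('q))
                                       + 2 * K powr (\<alpha>/2) * sqrt (32*pi) ^ CARD('q)"
  define C where "C = Kd * Kd * 4 * CU * CV * Cout * Cin"
  have Kd0: "0 \<le> Kd" by (simp add: Kd_def)
  have Hm0: "0 \<le> Hm" using K by (simp add: Hm_def)
  have Cout0: "0 \<le> Cout" by (simp add: Cout_def)
  have Cin0: "0 \<le> Cin" using al1 by (simp add: Cin_def)
  have CU0: "0 \<le> CU" and CV0: "0 \<le> CV" by (simp_all add: CU_def CV_def)
  have C0: "0 \<le> C" using Kd0 Cout0 Cin0 CU0 CV0 by (simp add: C_def)
  show "\<exists>C::real. \<forall>(p::real) (r::real) (\<eta>0::real) (\<eta>1::real) (l::'q)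
           (s::real) (t::real) (t'::real) (x::real^'q) (x'::real^'q).
      0 \<le> p \<longrightarrow> p \<le> R \<longrightarrow> 0 \<le> r \<longrightarrow> r \<le> R \<longrightarrow>
      1/R < \<eta>0 \<longrightarrow> \<eta>0 < 1/2 \<longrightarrow> 1/R < \<eta>1 \<longrightarrow> \<eta>1 < 1/2 \<longrightarrow>
      0 \<le> s \<longrightarrow> s < t \<longrightarrow> t \<le> t' \<longrightarrow> t' < K \<longrightarrow>
      (\<forall>i. \<bar>x $ i\<bar> \<le> K) \<longrightarrow> (\<forall>i. \<bar>x' $ i\<bar> \<le> K) \<longrightarrow>
      (let F = (\<lambda>(w::real^'q, z::real^'q).
                  norm (w - x) powr p * norm (z - x) powr p
                  * (heat_kernel_d (t - s) l (w - x) - heat_kernel_d (t' - s) l (w - x'))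
                  * (heat_kernel_d (t - s) l (z - x) - heat_kernel_d (t' - s) l (z - x'))
                  * (if norm (w - x) > max ((t' - s) powr (1/2 - \<eta>0)) (2 * norm (x - x')) then 1 else 0)
                  * exp (r * norm (w - x) + r * norm (z - x))
                  * (norm (w - z) powr (- \<alpha>) + 1))
       in integrable lborel F \<and>
          (\<integral>wz. F wz \<partial>lborel) \<le>
            C * (t - s) powr (-1 - \<alpha>/2) * exp (- \<eta>1 * (t' - s) powr (-2 * \<eta>0) / 256)
              * (min 1 (((norm (x - x'))\<^sup>2 + \<bar>t - t'\<bar>) / (t - s))) powr (1 - \<eta>1/2))"
  proof (rule exI[of _ C], intro allI impI)
    fix p r \<eta>0 \<eta>1 :: real and l :: 'q and s t t' :: real and x x' :: "real^'q"
    assume p0: "0 \<le> p" and pR: "p \<le> R" and r0: "0 \<le> r" and rR: "r \<le> R"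
      and e0l: "1/R < \<eta>0" and e0u: "\<eta>0 < 1/2" and e1l: "1/R < \<eta>1" and e1u: "\<eta>1 < 1/2"
      and s0: "0 \<le> s" and st: "s < t" and tt: "t \<le> t'" and tK: "t' < K"
      and xK: "\<forall>i. \<bar>x $ i\<bar> \<le> K" and x'K: "\<forall>i. \<bar>x' $ i\<bar> \<le> K"
    define a where "a = t - s"
    define b where "b = t' - s"
    have a0: "0 < a" using st by (simp add: a_def)
    have ab: "a \<le> b" using tt by (simp add: a_def b_def)
    have bK: "b \<le> K" using tK s0 by (simp add: b_def)
    have e10: "0 < \<eta>1"
    proof -
      have "0 < 1/R" using R by simp
      thus ?thesis using e1l by linarith
    qed
    have Hmx: "norm (x' - x) \<le> Hm"
    proof -
      have "norm (x' - x) \<le> (\<Sum>i\<in>UNIV. \<bar>(x' - x) $ i\<bar>)" by (rule norm_le_l1_cart)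
      also have "\<dots> \<le> (\<Sum>i\<in>(UNIV::'q set). 2*K)"
      proof (rule sum_mono)
        fix i :: 'q
        have "\<bar>x' $ i - x $ i\<bar> \<le> \<bar>x' $ i\<bar> + \<bar>x $ i\<bar>" by (rule abs_triangle_ineq4)
        thus "\<bar>(x' - x) $ i\<bar> \<le> 2*K" using xK[rule_format, of i] x'K[rule_format, of i] by simp
      qed
      also have "\<dots> = Hm" by (simp add: Hm_def)
      finally show ?thesis .
    qed
    define S where "S = (if b \<le> 2*a \<and> (norm (x' - x))\<^sup>2 \<le> a then norm (x' - x) / sqrt a + (b-a)/a else 1)"
    define E where "E = exp (- (b powr (-2*\<eta>0))/64)"
    define A where "A w = a powr (-(real CARD('q)+1)/2) * exp (-(norm (w - x))\<^sup>2/(128*a))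
          + b powr (-(real CARD('q)+1)/2) * exp (-(norm (w - x'))\<^sup>2/(128*b))" for w
    define B where "B z = a powr (-(real CARD('q)+1)/2) * exp (-(norm (z - x))\<^sup>2/(32*a))
          + b powr (-(real CARD('q)+1)/2) * exp (-(norm (z - x'))\<^sup>2/(32*b))" for z
    define P where "P w z = norm (w - z) powr (-\<alpha>) + 1" for w z :: "real^'q"
    define Q where "Q = (Kd*S*E*CU)*(Kd*S*CV)"
    define Hd where "Hd wz = Q * A (fst wz) * B (snd wz) * P (fst wz) (snd wz)" for wz
    have S0: "0 \<le> S" using a0 ab by (auto simp: S_def)
    have Q0: "0 \<le> Q" using Kd0 S0 CU0 CV0 by (simp add: Q_def E_def)
    show "let F = (\<lambda>(w::real^'q, z::real^'q).
                  norm (w - x) powr p * norm (z - x) powr p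
                  * (heat_kernel_d (t - s) l (w - x) - heat_kernel_d (t' - s) l (w - x'))
                  * (heat_kernel_d (t - s) l (z - x) - heat_kernel_d (t' - s) l (z - x'))
                  * (if norm (w - x) > max ((t' - s) powr (1/2 - \<eta>0)) (2 * norm (x - x')) then 1 else 0)
                  * exp (r * norm (w - x) + r * norm (z - x))
                  * (norm (w - z) powr (- \<alpha>) + 1))
       in integrable lborel F \<and>
          (\<integral>wz. F wz \<partial>lborel) \<le>
            C * (t - s) powr (-1 - \<alpha>/2) * exp (- \<eta>1 * (t' - s) powr (-2 * \<eta>0) / 256)
              * (min 1 (((norm (x - x'))\<^sup>2 + \<bar>t - t'\<bar>) / (t - s))) powr (1 - \<eta>1/2)"
      unfolding Let_def a_def[symmetric] b_def[symmetric]
    proof (rule dom_int[where H = Hd])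
      show "(\<lambda>(w::real^'q, z::real^'q).
                  norm (w - x) powr p * norm (z - x) powr p
                  * (heat_kernel_d a l (w - x) - heat_kernel_d b l (w - x'))
                  * (heat_kernel_d a l (z - x) - heat_kernel_d b l (z - x'))
                  * (if norm (w - x) > max (b powr (1/2 - \<eta>0)) (2 * norm (x - x')) then 1 else 0)
                  * exp (r * norm (w - x) + r * norm (z - x))
                  * (norm (w - z) powr (- \<alpha>) + 1)) \<in> borel_measurable lborel"
      proof -
        have "(\<lambda>(w::real^'q, z::real^'q).
                  norm (w - x) powr p * norm (z - x) powr p
                  * (heat_kernel_d a l (w - x) - heat_kernel_d b l (w - x'))
                  * (heat_kernel_d a l (z - x) - heat_kernel_d b l (z - x'))
                  * (if norm (w - x) > max (b powr (1/2 - \<eta>0)) (2 * norm (x - x')) then 1 else 0)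
                  * exp (r * norm (w - x) + r * norm (z - x))
                  * (norm (w - z) powr (- \<alpha>) + 1)) \<in> borel_measurable (borel \<Otimes>\<^sub>M borel)"
          unfolding heat_kernel_d_def heat_kernel_def by measurable
        thus ?thesis by (subst measurable_cong_sets[OF sets_lborel refl]) (simp add: borel_prod)
      qed
      show "0 \<le> C * a powr (-1 - \<alpha>/2) * exp (- \<eta>1 * b powr (-2 * \<eta>0) / 256)
              * (min 1 (((norm (x - x'))\<^sup>2 + \<bar>t - t'\<bar>) / a)) powr (1 - \<eta>1/2)"
        using C0 by simp
      show "\<bar>(case wz of (w, z) \<Rightarrow>
                  norm (w - x) powr p * norm (z - x) powr p
                  * (heat_kernel_d a l (w - x) - heat_kernel_d b l (w - x'))
                  * (heat_kernel_d a l (z - x) - heat_kernel_d b l (z - x'))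
                  * (if norm (w - x) > max (b powr (1/2 - \<eta>0)) (2 * norm (x - x')) then 1 else 0)
                  * exp (r * norm (w - x) + r * norm (z - x))
                  * (norm (w - z) powr (- \<alpha>) + 1))\<bar> \<le> Hd wz" for wz
      proof (cases wz)
        case (Pair w z)
        have A0: "0 \<le> A w" and B0: "0 \<le> B z" and P0: "0 \<le> P w z" by (auto simp: A_def B_def P_def)
        have Hd0: "0 \<le> Hd wz" using Q0 A0 B0 P0 by (simp add: Hd_def Pair)
        show ?thesis
        proof (cases "norm (w - x) > max (b powr (1/2 - \<eta>0)) (2 * norm (x - x'))")
          case False
          have I0: "(if norm (w - x) > max (b powr (1/2 - \<eta>0)) (2 * norm (x - x')) then 1 else 0) = (0::real)"
            using False by (rule if_not_P)
          show ?thesis unfolding Pair prod.case I0 using Hd0 Pair by simp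
        next
          case True
          have ub: "b powr (1/2 - \<eta>0) < norm (w - x)" using True by simp
          have uh: "2 * norm (x' - x) < norm (w - x)" using True by (simp add: norm_minus_commute)
          have U: "norm (w - x) powr p * exp (r * norm (w - x)) * \<bar>heat_kernel_d a l (w - x) - heat_kernel_d b l (w - x')\<bar>
                \<le> Kd * S * E * CU * A w"
            unfolding Kd_def S_def E_def CU_def A_def
            by (rule ubound_abs[OF a0 ab bK p0 pR r0 rR Hmx Hm0 ub uh])
          have V: "norm (z - x) powr p * exp (r * norm (z - x)) * \<bar>heat_kernel_d a l (z - x) - heat_kernel_d b l (z - x')\<bar>
                \<le> Kd * S * CV * B z"
            unfolding Kd_def S_def CV_def B_def
            by (rule vbound_abs[OF a0 ab bK p0 pR r0 rR Hmx Hm0])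
          have "\<bar>(case wz of (w, z) \<Rightarrow>
                  norm (w - x) powr p * norm (z - x) powr p
                  * (heat_kernel_d a l (w - x) - heat_kernel_d b l (w - x'))
                  * (heat_kernel_d a l (z - x) - heat_kernel_d b l (z - x'))
                  * (if norm (w - x) > max (b powr (1/2 - \<eta>0)) (2 * norm (x - x')) then 1 else 0)
                  * exp (r * norm (w - x) + r * norm (z - x))
                  * (norm (w - z) powr (- \<alpha>) + 1))\<bar>
             = (norm (w - x) powr p * exp (r * norm (w - x)) * \<bar>heat_kernel_d a l (w - x) - heat_kernel_d b l (w - x')\<bar>)
               * (norm (z - x) powr p * exp (r * norm (z - x)) * \<bar>heat_kernel_d a l (z - x) - heat_kernel_d b l (z - x')\<bar>)
               * P w z"
            using True P0 by (simp add: Pair abs_mult exp_add P_def[symmetric] mult_ac)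
          also have "\<dots> \<le> (Kd * S * E * CU * A w) * (Kd * S * CV * B z) * P w z"
            by (rule mult_right_mono[OF mult_mono[OF U V] P0]) (use Kd0 S0 CU0 A0 in \<open>auto simp: E_def\<close>)
          also have "\<dots> = Hd wz" by (simp add: Hd_def Q_def Pair mult_ac)
          finally show ?thesis .
        qed
      qed
      show "(\<integral>\<^sup>+wz. ennreal (Hd wz) \<partial>lborel) \<le> ennreal (C * a powr (-1 - \<alpha>/2) * exp (- \<eta>1 * b powr (-2 * \<eta>0) / 256)
              * (min 1 (((norm (x - x'))\<^sup>2 + \<bar>t - t'\<bar>) / a)) powr (1 - \<eta>1/2))"
      proof -
        have bK': "b < K" using tK s0 by (simp add: b_def)
        have I: "(\<integral>\<^sup>+wz. ennreal (Hd wz) \<partial>lborel) \<le> ennreal (Q * (a powr (-1/2) * Cout) * (a powr (-1/2 - \<alpha>/2) * Cin))"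
          unfolding Hd_def
        proof (rule prod_bound)
          show "A \<in> borel_measurable borel" unfolding A_def by measurable
          show "B \<in> borel_measurable borel" unfolding B_def by measurable
          show "(\<lambda>wz. P (fst wz) (snd wz)) \<in> borel_measurable (borel \<Otimes>\<^sub>M borel)" unfolding P_def by measurable
          show "0 \<le> A w" for w by (simp add: A_def)
          show "0 \<le> B z" for z by (simp add: B_def)
          show "0 \<le> P w z" for w z by (simp add: P_def)
          show "0 \<le> Q" by (rule Q0)
          show "(\<integral>\<^sup>+w. ennreal (A w) \<partial>lborel) \<le> ennreal (a powr (-1/2) * Cout)"
            unfolding A_def Cout_def by (rule outer_bound[OF a0 ab])
          show "(\<integral>\<^sup>+z. ennreal (B z * P w z) \<partial>lborel) \<le> ennreal (a powr (-1/2 - \<alpha>/2) * Cin)" for w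
            unfolding B_def P_def Cin_def by (rule inner_bound[OF a0 ab bK' al0 al1])
          show "0 \<le> a powr (-1/2 - \<alpha>/2) * Cin" using Cin0 by simp
          show "0 \<le> a powr (-1/2) * Cout" using Cout0 by simp
        qed
        define m where "m = min 1 (((norm (x - x'))\<^sup>2 + \<bar>t - t'\<bar>) / a)"
        define E' where "E' = exp (- \<eta>1 * b powr (-2 * \<eta>0) / 256)"
        define X where "X = Kd*Kd*CU*CV*Cout*Cin*a powr (-1 - \<alpha>/2)"
        have X0: "0 \<le> X" using Kd0 CU0 CV0 Cout0 Cin0 by (simp add: X_def)
        have eqL: "Q * (a powr (-1/2) * Cout) * (a powr (-1/2 - \<alpha>/2) * Cin) = X * (S\<^sup>2 * E)"
        proof -
          have "a powr (-1/2) * a powr (-1/2 - \<alpha>/2) = a powr (-1 - \<alpha>/2)" by (simp add: powr_add[symmetric])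
          thus ?thesis by (simp add: Q_def X_def power2_eq_square mult_ac)
        qed
        have eqR: "C * a powr (-1 - \<alpha>/2) * E' * m powr (1 - \<eta>1/2) = X * (4 * E' * m powr (1 - \<eta>1/2))"
          by (simp add: C_def X_def mult_ac)
        have mdef: "m = min 1 (((norm (x' - x))\<^sup>2 + (b - a)) / a)"
          using tt by (simp add: m_def norm_minus_commute a_def b_def)
        have m0: "0 \<le> m" using a0 ab by (simp add: mdef)
        have m1: "m \<le> 1" by (simp add: m_def)
        have S2: "S\<^sup>2 \<le> 4 * m" unfolding S_def mdef by (rule S2_bound[OF a0 ab]) simp
        have mp: "m \<le> m powr (1 - \<eta>1/2)" by (rule min_powr[OF m0 m1]) (use e10 e1u in auto)
        have EE: "E \<le> E'"
        proof -
          have B0: "0 \<le> b powr (-2*\<eta>0)" by simp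
          have "\<eta>1 * b powr (-2*\<eta>0) \<le> 4 * b powr (-2*\<eta>0)"
            by (rule mult_right_mono[OF _ B0]) (use e1u in simp)
          hence "- (b powr (-2*\<eta>0))/64 \<le> - \<eta>1 * b powr (-2 * \<eta>0) / 256"
            by simp
          thus ?thesis by (simp add: E_def E'_def)
        qed
        have "S\<^sup>2 * E \<le> (4 * m powr (1 - \<eta>1/2)) * E'"
          using S2 mp EE by (intro mult_mono) (auto simp: E_def)
        hence "X * (S\<^sup>2 * E) \<le> X * (4 * E' * m powr (1 - \<eta>1/2))"
          using X0 by (intro mult_left_mono) (auto simp: mult_ac)
        hence "Q * (a powr (-1/2) * Cout) * (a powr (-1/2 - \<alpha>/2) * Cin) \<le> C * a powr (-1 - \<alpha>/2) * E' * m powr (1 - \<eta>1/2)"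
          unfolding eqL eqR .
        hence "ennreal (Q * (a powr (-1/2) * Cout) * (a powr (-1/2 - \<alpha>/2) * Cin)) \<le> ennreal (C * a powr (-1 - \<alpha>/2) * E' * m powr (1 - \<eta>1/2))"
          by (rule ennreal_leI)
        with I show ?thesis unfolding m_def E'_def by (rule order_trans)
      qed
    qed
  qed
qed


end
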